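(* Let $\xi,\delta,\nu,\epsilon,\mu,\sigma,\alpha,\beta,\gamma$ be real constants with $\delta<0$, and fix $T>0$. For each $N\geq 1$, let $I_1,\dots,I_N$ be independent standard Gaussian random variables ($I_i\sim\mathcal N(0,1)$), and let $(x_{1,0},y_{1,0}),\dots,(x_{N,0},y_{N,0})$ be i.i.d. random vectors in $\mathbb R^2$ with finite second moment, independent of $(I_i)_{i=1}^N$. Consider the interacting particle system \[ \begin{aligned} \frac{dx_i}{dt} &= \xi x_i + \delta x_i^3 + \nu y_i + \epsilon X + \mu + \sigma I_i,\\ \frac{dy_i}{dt} &= \alpha( x_i + \beta y_i + \gamma),\\ x_i(0)&=x_{i,0},\quad y_i(0)=y_{i,0}, \end{aligned}\qquad i=1,\dots,N, \] where $X(t)=\frac1N\sum_{j=1}^N x_j(t)$. Consider also, for $i=1,\dots,N$, the solutions $(\hat x_i,\hat y_i)$ of the mean-field (McKean–Vlasov type) system driven by the same random current and the same initial condition: \[ \begin{aligned} \frac{d\hat x_i}{dt} &= \xi \hat x_i + \delta \hat x_i^3 + \nu \hat y_i + \epsilon\, \mathbb E[\hat x_i(t)] + \mu + \sigma I_i,\\ \frac{d\hat y_i}{dt} &= \alpha( \hat x_i + \beta \hat y_i + \gamma),\\ \hat x_i(0)&=x_{i,0},\quad \hat y_i(0)=y_{i,0}, \end{aligned} \] so that $(\hat x_i,\hat y_i)_{i=1}^N$ are $N$ independent copies of the solution of this mean-field system (here $\mathbb E[\hat x_i(t)]$ is the expectation with respect to the law of $\hat x_i(t)$, which is the same for all $i$).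 Then for every $i$, \[ \lim_{N\to+\infty}\mathbb E\Big[\sup_{t\in[0,T]}|x_i(t)-\hat x_i(t)| + \sup_{t\in[0,T]}|y_i(t)-\hat y_i(t)|\Big]=0. \]
   Context: This is the propagation of chaos property for a population of FitzHugh–Nagumo (Bonhoeffer–van der Pol) oscillators coupled through the mean field $X$ in the $x$-variable, with quenched Gaussian input currents $\mu+\sigma I_i$. *)

theory Defs
  imports "HOL-Probability.Probability"
begin

end

theory Submission
  imports Defs
begin

lemma deriv_nonpos_mono:
  fixes f g :: "real \<Rightarrow> real"
  assumes "a \<le> b"
    and d: "\<And>t. t \<in> {a..b} \<Longrightarrow> (f has_real_derivative g t) (at t within {a..b})"
    and n: "\<And>t. t \<in> {a..b} \<Longrightarrow> g t \<le> 0"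
  shows "f b \<le> f a"
proof -
  have "\<exists>x\<in>{a..b}. f b - f a = (\<lambda>h. g x * h) (b - a)"
    by (rule mvt_very_simple[OF assms(1)]) (use d in \<open>auto simp: has_field_derivative_def\<close>)
  then obtain x where "x \<in> {a..b}" "f b - f a = (b - a) * g x" by auto
  moreover have "(b - a) * g x \<le> 0" using n[OF \<open>x\<in>_\<close>] assms(1) by (simp add: mult_nonneg_nonpos)
  ultimately show ?thesis by simp
qed

lemma gronwall:
  fixes u u' f :: "real \<Rightarrow> real"
  assumes C: "0 \<le> C" and T: "0 \<le> T"
    and d: "\<And>t. t \<in> {0..T} \<Longrightarrow> (u has_real_derivative u' t) (at t within {0..T})"
    and le: "\<And>t. t \<in> {0..T} \<Longrightarrow> u' t \<le> C * u t + f t"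
    and fc: "continuous_on {0..T} f"
    and f0: "\<And>t. t \<in> {0..T} \<Longrightarrow> 0 \<le> f t"
    and u0: "0 \<le> u 0"
    and t: "t \<in> {0..T}"
  shows "u t \<le> exp (C * T) * (u 0 + integral {0..T} f)"
proof -
  define h where "h r = exp (- C * r) * f r" for r
  have hc: "continuous_on {0..T} h" unfolding h_def by (intro continuous_intros fc)
  define \<phi> where "\<phi> s = exp (- C * s) * u s - integral {0..s} h" for s
  have sub: "{0..t} \<subseteq> {0..T}" using t by auto
  have "\<phi> t \<le> \<phi> 0"
  proof (rule deriv_nonpos_mono[where f=\<phi> and a=0 and b=t and g = "\<lambda>s. exp (- C * s) * u' s - C * exp (- C * s) * u s - h s"])
    show "0 \<le> t" using t by auto
  next
    fix s assume s: "s \<in> {0..t}"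
    then have sT: "s \<in> {0..T}" using sub by auto
    have "((\<lambda>s. exp (- C * s) * u s) has_real_derivative
        exp (- C * s) * u' s + (- C * exp (- C * s)) * u s) (at s within {0..T})"
      using d[OF sT] by (auto intro!: derivative_eq_intros simp: algebra_simps)
    moreover have "((\<lambda>x. integral {0..x} h) has_real_derivative h s) (at s within {0..T})"
      by (rule integral_has_real_derivative[OF hc sT])
    ultimately have "(\<phi> has_real_derivative (exp (- C * s) * u' s + (- C * exp (- C * s)) * u s - h s)) (at s within {0..T})"
      unfolding \<phi>_def[abs_def] by (rule DERIV_diff)
    then have "(\<phi> has_real_derivative (exp (- C * s) * u' s - C * exp (- C * s) * u s - h s)) (at s within {0..T})"
      by simp
    then show "(\<phi> has_real_derivative (exp (- C * s) * u' s - C * exp (- C * s) * u s - h s)) (at s within {0..t})"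
      using has_field_derivative_subset sub by blast
    have "exp (- C * s) * u' s \<le> exp (- C * s) * (C * u s + f s)"
      using le[OF sT] by (intro mult_left_mono) auto
    then show "exp (- C * s) * u' s - C * exp (- C * s) * u s - h s \<le> 0"
      unfolding h_def by (simp add: algebra_simps)
  qed
  then have A: "exp (- C * t) * u t \<le> u 0 + integral {0..t} h"
    unfolding \<phi>_def by simp
  have "integral {0..t} h \<le> integral {0..t} f"
    using sub f0 C t
    by (intro integral_le integrable_continuous_interval continuous_on_subset[OF hc]
          continuous_on_subset[OF fc]) (auto simp: h_def intro!: mult_left_le_one_le)
  also have "\<dots> \<le> integral {0..T} f"
    using sub f0 t by (intro integral_subset_le integrable_continuous_interval continuous_on_subset[OF fc]) auto
  finally have hf: "integral {0..t} h \<le> integral {0..T} f" .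
  have "u t = exp (C * t) * (exp (- C * t) * u t)" by (simp add: exp_minus)
  also have "\<dots> \<le> exp (C * t) * (u 0 + integral {0..t} h)" using A by simp
  also have "\<dots> \<le> exp (C * t) * (u 0 + integral {0..T} f)" using hf by simp
  finally have B: "u t \<le> exp (C * t) * (u 0 + integral {0..T} f)" .
  have "0 \<le> u 0 + integral {0..T} f"
    using u0 f0 by (intro add_nonneg_nonneg integral_nonneg integrable_continuous_interval fc) auto
  moreover have "exp (C * t) \<le> exp (C * T)" using t C by (auto intro: mult_left_mono)
  ultimately show ?thesis using B by (meson mult_right_mono order_trans)
qed


definition C0 :: "real \<Rightarrow> real \<Rightarrow> real \<Rightarrow> real \<Rightarrow> real" where
  "C0 \<xi> \<nu> \<alpha> \<beta> = 2*\<bar>\<xi>\<bar> + \<bar>\<nu>\<bar> + 1 + \<bar>\<alpha>\<bar> + 2*\<bar>\<alpha>*\<beta>\<bar>"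

lemma cube_mono_prod: "0 \<le> ((x1::real)^3 - x2^3) * (x1 - x2)"
proof -
  have e: "(x1^3 - x2^3) * (x1 - x2) = (x1 - x2)^2 * ((x1 + x2/2)^2 + 3/4 * x2^2)"
    by (simp add: power2_eq_square power3_eq_cube algebra_simps)
  show ?thesis unfolding e by simp
qed

lemma energy:
  fixes x1 x2 y1 y2 a1 a2 \<xi> \<delta> \<nu> \<alpha> \<beta> \<gamma> :: real
  assumes "\<delta> \<le> 0"
  shows "2*(x1 - x2)*((\<xi>*x1 + \<delta>*x1^3 + \<nu>*y1 + a1) - (\<xi>*x2 + \<delta>*x2^3 + \<nu>*y2 + a2))
        + 2*(y1 - y2)*(\<alpha>*(x1 + \<beta>*y1 + \<gamma>) - \<alpha>*(x2 + \<beta>*y2 + \<gamma>))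
       \<le> C0 \<xi> \<nu> \<alpha> \<beta> * ((x1-x2)^2 + (y1-y2)^2) + (a1 - a2)^2"
proof -
  define d where "d = x1 - x2"
  define e where "e = y1 - y2"
  define b where "b = a1 - a2"
  have c: "\<delta> * ((x1^3 - x2^3) * d) \<le> 0"
    using cube_mono_prod[of x1 x2] assms unfolding d_def by (simp add: mult_nonpos_nonneg)
  have lhs: "2*(x1 - x2)*((\<xi>*x1 + \<delta>*x1^3 + \<nu>*y1 + a1) - (\<xi>*x2 + \<delta>*x2^3 + \<nu>*y2 + a2))
        + 2*(y1 - y2)*(\<alpha>*(x1 + \<beta>*y1 + \<gamma>) - \<alpha>*(x2 + \<beta>*y2 + \<gamma>))
      = 2*\<xi>*d^2 + 2*(\<delta> * ((x1^3 - x2^3) * d)) + 2*\<nu>*d*e + 2*d*b + 2*\<alpha>*e*d + 2*\<alpha>*\<beta>*e^2"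
    unfolding d_def e_def b_def by (simp add: algebra_simps power2_eq_square)
  have de: "2*\<bar>d*e\<bar> \<le> d^2 + e^2"
    using sum_squares_bound[of "\<bar>d\<bar>" "\<bar>e\<bar>"] by (simp add: abs_mult)
  have h1: "2*\<xi>*d^2 \<le> 2*\<bar>\<xi>\<bar>*d^2" by (simp add: mult_right_mono)
  have h2: "2*\<nu>*d*e \<le> \<bar>\<nu>\<bar>*(d^2+e^2)"
  proof -
    have "2*\<nu>*d*e \<le> \<bar>\<nu>\<bar>*(2*\<bar>d*e\<bar>)" using abs_ge_self[of "\<nu>*(d*e)"] by (simp add: abs_mult mult.assoc)
    also have "\<dots> \<le> \<bar>\<nu>\<bar>*(d^2+e^2)" using de by (simp add: mult_left_mono)
    finally show ?thesis .
  qed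
  have h3: "2*\<alpha>*e*d \<le> \<bar>\<alpha>\<bar>*(d^2+e^2)"
  proof -
    have "2*\<alpha>*e*d \<le> \<bar>\<alpha>\<bar>*(2*\<bar>d*e\<bar>)" using abs_ge_self[of "\<alpha>*(d*e)"] by (simp add: abs_mult mult.assoc mult.commute mult.left_commute)
    also have "\<dots> \<le> \<bar>\<alpha>\<bar>*(d^2+e^2)" using de by (simp add: mult_left_mono)
    finally show ?thesis .
  qed
  have h4: "2*d*b \<le> d^2 + b^2" by (simp add: sum_squares_bound)
  have h5: "2*\<alpha>*\<beta>*e^2 \<le> 2*\<bar>\<alpha>*\<beta>\<bar>*e^2" by (simp add: mult_right_mono)
  have "2*\<bar>\<xi>\<bar>*d^2 + \<bar>\<nu>\<bar>*(d^2+e^2) + (d^2 + b^2) + \<bar>\<alpha>\<bar>*(d^2+e^2) + 2*\<bar>\<alpha>*\<beta>\<bar>*e^2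
      \<le> C0 \<xi> \<nu> \<alpha> \<beta> * (d^2 + e^2) + b^2"
    unfolding C0_def by (simp add: algebra_simps)
  then show ?thesis unfolding lhs using c h1 h2 h3 h4 h5 unfolding d_def e_def b_def by linarith
qed


locale fhn = prob_space M for M :: "'a measure" +
  fixes \<xi> \<delta> \<nu> \<epsilon> \<mu> \<sigma> \<alpha> \<beta> \<gamma> T :: real
    and I x0 y0 :: "nat \<Rightarrow> 'a \<Rightarrow> real"
    and x y :: "nat \<Rightarrow> nat \<Rightarrow> 'a \<Rightarrow> real \<Rightarrow> real"
    and xh yh :: "nat \<Rightarrow> 'a \<Rightarrow> real \<Rightarrow> real"
    and i :: nat
  assumes delta: "\<delta> < 0"
    and T: "T > 0"
    and indep: "indep_vars (\<lambda>_. borel)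
                  (\<lambda>k. case k of Inl j \<Rightarrow> (\<lambda>\<omega>. (I j \<omega>, 0::real))
                               | Inr j \<Rightarrow> (\<lambda>\<omega>. (x0 j \<omega>, y0 j \<omega>))) UNIV"
    and gauss: "\<And>j. distributed M lborel (I j) std_normal_density"
    and iid_init: "\<And>j. distr M borel (\<lambda>\<omega>. (x0 j \<omega>, y0 j \<omega>)) = distr M borel (\<lambda>\<omega>. (x0 0 \<omega>, y0 0 \<omega>))"
    and mom_x: "integrable M (\<lambda>\<omega>. (x0 0 \<omega>)^2)"
    and mom_y: "integrable M (\<lambda>\<omega>. (y0 0 \<omega>)^2)"
    and ode_x: "\<And>N j \<omega> t. N \<ge> 1 \<Longrightarrow> j < N \<Longrightarrow> \<omega> \<in> space M \<Longrightarrow> t \<in> {0..T} \<Longrightarrow>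
       (x N j \<omega> has_real_derivative
          (\<xi> * x N j \<omega> t + \<delta> * (x N j \<omega> t)^3 + \<nu> * y N j \<omega> t
           + \<epsilon> * ((\<Sum>k<N. x N k \<omega> t) / real N) + \<mu> + \<sigma> * I j \<omega>)) (at t within {0..T})"
    and ode_y: "\<And>N j \<omega> t. N \<ge> 1 \<Longrightarrow> j < N \<Longrightarrow> \<omega> \<in> space M \<Longrightarrow> t \<in> {0..T} \<Longrightarrow>
       (y N j \<omega> has_real_derivative (\<alpha> * (x N j \<omega> t + \<beta> * y N j \<omega> t + \<gamma>))) (at t within {0..T})"
    and init: "\<And>N j \<omega>. N \<ge> 1 \<Longrightarrow> j < N \<Longrightarrow> \<omega> \<in> space M \<Longrightarrow>
       x N j \<omega> 0 = x0 j \<omega> \<and> y N j \<omega> 0 = y0 j \<omega>"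
    and mf_int: "\<And>j t. t \<in> {0..T} \<Longrightarrow> integrable M (\<lambda>\<omega>. xh j \<omega> t)"
    and mf_x: "\<And>j \<omega> t. \<omega> \<in> space M \<Longrightarrow> t \<in> {0..T} \<Longrightarrow>
       (xh j \<omega> has_real_derivative
          (\<xi> * xh j \<omega> t + \<delta> * (xh j \<omega> t)^3 + \<nu> * yh j \<omega> t
           + \<epsilon> * expectation (\<lambda>\<omega>'. xh j \<omega>' t) + \<mu> + \<sigma> * I j \<omega>)) (at t within {0..T})"
    and mf_y: "\<And>j \<omega> t. \<omega> \<in> space M \<Longrightarrow> t \<in> {0..T} \<Longrightarrow>
       (yh j \<omega> has_real_derivative (\<alpha> * (xh j \<omega> t + \<beta> * yh j \<omega> t + \<gamma>))) (at t within {0..T})"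
    and mf_init: "\<And>j \<omega>. \<omega> \<in> space M \<Longrightarrow> xh j \<omega> 0 = x0 j \<omega> \<and> yh j \<omega> 0 = y0 j \<omega>"
begin

definition Pv :: "nat \<Rightarrow> 'a \<Rightarrow> real \<times> real" where "Pv j \<omega> = (I j \<omega>, 0)"
definition Qv :: "nat \<Rightarrow> 'a \<Rightarrow> real \<times> real" where "Qv j \<omega> = (x0 j \<omega>, y0 j \<omega>)"
definition Dv :: "nat \<Rightarrow> 'a \<Rightarrow> (real \<times> real) \<times> (real \<times> real)" where "Dv j \<omega> = (Pv j \<omega>, Qv j \<omega>)"

abbreviation "Xf \<equiv> (\<lambda>k. case k of Inl j \<Rightarrow> Pv j | Inr j \<Rightarrow> Qv j)"

lemma indep': "indep_vars (\<lambda>_. borel) Xf UNIV"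
proof -
  have "(\<lambda>k. case k of Inl j \<Rightarrow> (\<lambda>\<omega>. (I j \<omega>, 0::real)) | Inr j \<Rightarrow> (\<lambda>\<omega>. (x0 j \<omega>, y0 j \<omega>))) = Xf"
    by (auto simp: fun_eq_iff Pv_def Qv_def split: sum.split)
  then show ?thesis using indep by simp
qed

lemma Pv_meas[measurable]: "Pv j \<in> borel_measurable M"
  using indep' unfolding indep_vars_def by (metis (no_types, lifting) UNIV_I sum.simps(5))

lemma Qv_meas[measurable]: "Qv j \<in> borel_measurable M"
  using indep' unfolding indep_vars_def by (metis (no_types, lifting) UNIV_I sum.simps(6))

lemma I_meas[measurable]: "I j \<in> borel_measurable M"
proof -
  have "(\<lambda>\<omega>. fst (Pv j \<omega>)) \<in> borel_measurable M"
    by (rule measurable_compose[OF Pv_meas borel_measurable_continuous_onI]) (intro continuous_intros)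
  then show ?thesis by (simp add: Pv_def)
qed

lemma x0_meas[measurable]: "x0 j \<in> borel_measurable M"
proof -
  have "(\<lambda>\<omega>. fst (Qv j \<omega>)) \<in> borel_measurable M"
    by (rule measurable_compose[OF Qv_meas borel_measurable_continuous_onI]) (intro continuous_intros)
  then show ?thesis by (simp add: Qv_def)
qed

lemma y0_meas[measurable]: "y0 j \<in> borel_measurable M"
proof -
  have "(\<lambda>\<omega>. snd (Qv j \<omega>)) \<in> borel_measurable M"
    by (rule measurable_compose[OF Qv_meas borel_measurable_continuous_onI]) (intro continuous_intros)
  then show ?thesis by (simp add: Qv_def)
qed

lemma Dv_meas[measurable]: "Dv j \<in> borel_measurable M"
  unfolding Dv_def by measurable

lemma indep_PQ: "indep_var borel (Pv j) borel (Qv j)"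
proof -
  have "indep_var (PiM {Inl j} (\<lambda>_. borel)) (\<lambda>\<omega>. restrict (\<lambda>k. Xf k \<omega>) {Inl j})
                  (PiM {Inr j} (\<lambda>_. borel)) (\<lambda>\<omega>. restrict (\<lambda>k. Xf k \<omega>) {Inr j})"
    by (rule indep_var_restrict[OF indep']) auto
  then have "indep_var borel ((\<lambda>f. f (Inl j)) \<circ> (\<lambda>\<omega>. restrict (\<lambda>k. Xf k \<omega>) {Inl j}))
                  borel ((\<lambda>f. f (Inr j)) \<circ> (\<lambda>\<omega>. restrict (\<lambda>k. Xf k \<omega>) {Inr j}))"
    by (rule indep_var_compose) (auto intro!: measurable_component_singleton)
  moreover have "((\<lambda>f. f (Inl j)) \<circ> (\<lambda>\<omega>. restrict (\<lambda>k. Xf k \<omega>) {Inl j})) = Pv j"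
    by (auto simp: fun_eq_iff)
  moreover have "((\<lambda>f. f (Inr j)) \<circ> (\<lambda>\<omega>. restrict (\<lambda>k. Xf k \<omega>) {Inr j})) = Qv j"
    by (auto simp: fun_eq_iff)
  ultimately show ?thesis by simp
qed

lemma indep_D:
  assumes "j \<noteq> k"
  shows "indep_var borel (Dv j) borel (Dv k)"
proof -
  have "indep_var (PiM {Inl j, Inr j} (\<lambda>_. borel)) (\<lambda>\<omega>. restrict (\<lambda>k. Xf k \<omega>) {Inl j, Inr j})
                  (PiM {Inl k, Inr k} (\<lambda>_. borel)) (\<lambda>\<omega>. restrict (\<lambda>k. Xf k \<omega>) {Inl k, Inr k})"
    by (rule indep_var_restrict[OF indep']) (use assms in auto)
  then have "indep_var borel ((\<lambda>f. (f (Inl j), f (Inr j))) \<circ> (\<lambda>\<omega>. restrict (\<lambda>k. Xf k \<omega>) {Inl j, Inr j}))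
                  borel ((\<lambda>f. (f (Inl k), f (Inr k))) \<circ> (\<lambda>\<omega>. restrict (\<lambda>k. Xf k \<omega>) {Inl k, Inr k}))"
    by (rule indep_var_compose) (auto intro!: measurable_component_singleton)
  moreover have "((\<lambda>f. (f (Inl j), f (Inr j))) \<circ> (\<lambda>\<omega>. restrict (\<lambda>k. Xf k \<omega>) {Inl j, Inr j})) = Dv j"
    by (auto simp: fun_eq_iff Dv_def)
  moreover have "((\<lambda>f. (f (Inl k), f (Inr k))) \<circ> (\<lambda>\<omega>. restrict (\<lambda>k. Xf k \<omega>) {Inl k, Inr k})) = Dv k"
    by (auto simp: fun_eq_iff Dv_def)
  ultimately show ?thesis by simp
qed

lemma distr_P: "distr M borel (Pv j) = distr M borel (Pv i)"
proof -
  have "distr M borel (Pv j) = distr (distr M lborel (I j)) borel (\<lambda>a. (a, 0::real))" for j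
    by (subst distr_distr) (auto simp: comp_def Pv_def[abs_def])
  moreover have "distr M lborel (I j) = distr M lborel (I i)"
    using gauss[of j] gauss[of i] by (simp add: distributed_distr_eq_density)
  ultimately show ?thesis by metis
qed

lemma distr_Q: "distr M borel (Qv j) = distr M borel (Qv i)"
  using iid_init[of j] iid_init[of i] by (simp add: Qv_def[abs_def])

lemma distr_D: "distr M borel (Dv j) = distr M borel (Dv i)"
proof -
  have "distr M borel (Dv j) = distr M borel (Pv j) \<Otimes>\<^sub>M distr M borel (Qv j)" for j
    using indep_PQ[of j] unfolding indep_var_distribution_eq Dv_def[abs_def]
    by (simp add: borel_prod)
  then show ?thesis using distr_P distr_Q by metis
qed

lemma integral_D:
  fixes h :: "(real \<times> real) \<times> (real \<times> real) \<Rightarrow> real"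
  assumes [measurable]: "h \<in> borel_measurable borel"
  shows "integral\<^sup>L M (\<lambda>\<omega>. h (Dv j \<omega>)) = integral\<^sup>L M (\<lambda>\<omega>. h (Dv i \<omega>))"
proof -
  have "integral\<^sup>L (distr M borel (Dv k)) h = integral\<^sup>L M (\<lambda>\<omega>. h (Dv k \<omega>))" for k
    by (rule integral_distr) auto
  then show ?thesis using distr_D[of j] by metis
qed

lemma integrable_D:
  fixes h :: "(real \<times> real) \<times> (real \<times> real) \<Rightarrow> real"
  assumes [measurable]: "h \<in> borel_measurable borel"
  shows "integrable M (\<lambda>\<omega>. h (Dv j \<omega>)) \<longleftrightarrow> integrable M (\<lambda>\<omega>. h (Dv i \<omega>))"
proof -
  have "integrable (distr M borel (Dv k)) h = integrable M (\<lambda>\<omega>. h (Dv k \<omega>))" for k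
    by (rule integrable_distr_eq) auto
  then show ?thesis using distr_D[of j] by metis
qed

lemma AE_D:
  assumes "C \<in> sets borel" "\<And>\<omega>. \<omega> \<in> space M \<Longrightarrow> Dv i \<omega> \<in> C"
  shows "AE \<omega> in M. Dv j \<omega> \<in> C"
proof -
  have "AE d in distr M borel (Dv i). d \<in> C"
    using assms by (subst AE_distr_iff) auto
  then have "AE d in distr M borel (Dv j). d \<in> C" unfolding distr_D[of j] .
  then show ?thesis using assms by (subst (asm) AE_distr_iff) auto
qed

end

lemma u_deriv:
  fixes x1 x2 y1 y2 :: "real \<Rightarrow> real"
  assumes "(x1 has_real_derivative X1) (at t within S)" "(x2 has_real_derivative X2) (at t within S)"
    "(y1 has_real_derivative Y1) (at t within S)" "(y2 has_real_derivative Y2) (at t within S)"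
  shows "((\<lambda>s. (x1 s - x2 s)^2 + (y1 s - y2 s)^2) has_real_derivative
           (2*(x1 t - x2 t)*(X1 - X2) + 2*(y1 t - y2 t)*(Y1 - Y2))) (at t within S)"
  using assms by (auto intro!: derivative_eq_intros simp: algebra_simps)

context fhn
begin

definition "Cz = C0 \<xi> \<nu> \<alpha> \<beta>"
definition "L2 = exp (Cz * T) * (1 + T * \<sigma>^2)"
definition "Lc = sqrt L2"

lemma Cz_nonneg: "0 \<le> Cz" unfolding Cz_def C0_def by simp
lemma L2_pos: "0 < L2" unfolding L2_def using T by (simp add: add_pos_nonneg)
lemma Lc_nonneg: "0 \<le> Lc" unfolding Lc_def using L2_pos by simp

lemma dist_D_sq:
  "(dist (Dv j \<omega>) (Dv k \<omega>'))^2 = (I j \<omega> - I k \<omega>')^2 + (x0 j \<omega> - x0 k \<omega>')^2 + (y0 j \<omega> - y0 k \<omega>')^2"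
  by (simp add: Dv_def Pv_def Qv_def dist_Pair_Pair dist_real_def)

lemma xh_cont: "\<omega> \<in> space M \<Longrightarrow> continuous_on {0..T} (xh j \<omega>)"
  by (metis DERIV_continuous continuous_on_eq_continuous_within mf_x)

lemma yh_cont: "\<omega> \<in> space M \<Longrightarrow> continuous_on {0..T} (yh j \<omega>)"
  by (metis DERIV_continuous continuous_on_eq_continuous_within mf_y)

lemma mf_cmp:
  assumes \<omega>: "\<omega> \<in> space M" and \<omega>': "\<omega>' \<in> space M" and t: "t \<in> {0..T}"
  shows "(xh i \<omega> t - xh i \<omega>' t)^2 + (yh i \<omega> t - yh i \<omega>' t)^2 \<le> L2 * (dist (Dv i \<omega>) (Dv i \<omega>'))^2"
proof -
  define m where "m s = expectation (\<lambda>\<omega>'. xh i \<omega>' s)" for s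
  define u where "u s = (xh i \<omega> s - xh i \<omega>' s)^2 + (yh i \<omega> s - yh i \<omega>' s)^2" for s
  define c where "c = \<sigma>^2 * (I i \<omega> - I i \<omega>')^2"
  have "u t \<le> exp (Cz * T) * (u 0 + integral {0..T} (\<lambda>_. c))"
  proof (rule gronwall[OF Cz_nonneg less_imp_le[OF T] _ _ _ _ _ t])
    fix s assume s: "s \<in> {0..T}"
    show "(u has_real_derivative
       2*(xh i \<omega> s - xh i \<omega>' s)*((\<xi> * xh i \<omega> s + \<delta> * (xh i \<omega> s)^3 + \<nu> * yh i \<omega> s + (\<epsilon> * m s + \<mu> + \<sigma> * I i \<omega>))
          - (\<xi> * xh i \<omega>' s + \<delta> * (xh i \<omega>' s)^3 + \<nu> * yh i \<omega>' s + (\<epsilon> * m s + \<mu> + \<sigma> * I i \<omega>')))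
     + 2*(yh i \<omega> s - yh i \<omega>' s)*(\<alpha> * (xh i \<omega> s + \<beta> * yh i \<omega> s + \<gamma>) - \<alpha> * (xh i \<omega>' s + \<beta> * yh i \<omega>' s + \<gamma>)))
       (at s within {0..T})"
      unfolding u_def[abs_def] m_def
      using u_deriv[OF mf_x[OF \<omega> s] mf_x[OF \<omega>' s] mf_y[OF \<omega> s] mf_y[OF \<omega>' s], of i i i i]
      by (simp add: add.assoc)
    show "2*(xh i \<omega> s - xh i \<omega>' s)*((\<xi> * xh i \<omega> s + \<delta> * (xh i \<omega> s)^3 + \<nu> * yh i \<omega> s + (\<epsilon> * m s + \<mu> + \<sigma> * I i \<omega>))
          - (\<xi> * xh i \<omega>' s + \<delta> * (xh i \<omega>' s)^3 + \<nu> * yh i \<omega>' s + (\<epsilon> * m s + \<mu> + \<sigma> * I i \<omega>')))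
     + 2*(yh i \<omega> s - yh i \<omega>' s)*(\<alpha> * (xh i \<omega> s + \<beta> * yh i \<omega> s + \<gamma>) - \<alpha> * (xh i \<omega>' s + \<beta> * yh i \<omega>' s + \<gamma>))
      \<le> Cz * u s + c"
    proof -
      have "(\<epsilon> * m s + \<mu> + \<sigma> * I i \<omega> - (\<epsilon> * m s + \<mu> + \<sigma> * I i \<omega>'))^2 = c"
        unfolding c_def by (simp add: algebra_simps power2_eq_square)
      then show ?thesis using energy[OF less_imp_le[OF delta]] unfolding Cz_def u_def by metis
    qed
  qed (auto simp: c_def u_def)
  also have "u 0 = (x0 i \<omega> - x0 i \<omega>')^2 + (y0 i \<omega> - y0 i \<omega>')^2"
    unfolding u_def using mf_init[OF \<omega>] mf_init[OF \<omega>'] by simp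
  also have "integral {0..T} (\<lambda>_. c) = T * c" using T by simp
  also have "exp (Cz * T) * ((x0 i \<omega> - x0 i \<omega>')^2 + (y0 i \<omega> - y0 i \<omega>')^2 + T * c)
      \<le> exp (Cz * T) * ((1 + T * \<sigma>^2) * ((dist (Dv i \<omega>) (Dv i \<omega>'))^2))"
  proof (rule mult_left_mono)
    define a where "a = (x0 i \<omega> - x0 i \<omega>')^2 + (y0 i \<omega> - y0 i \<omega>')^2"
    define b where "b = (I i \<omega> - I i \<omega>')^2"
    have "T * c = (T * \<sigma>^2) * b" unfolding c_def b_def by simp
    moreover have "0 \<le> (T * \<sigma>^2) * a" using T unfolding a_def by simp
    moreover have "0 \<le> b" unfolding b_def by simp
    moreover have "(1 + T * \<sigma>^2) * ((dist (Dv i \<omega>) (Dv i \<omega>'))^2) = a + b + (T * \<sigma>^2) * b + (T * \<sigma>^2) * a"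
      unfolding dist_D_sq a_def b_def by (simp add: algebra_simps)
    ultimately show "(x0 i \<omega> - x0 i \<omega>')^2 + (y0 i \<omega> - y0 i \<omega>')^2 + T * c
        \<le> (1 + T * \<sigma>^2) * ((dist (Dv i \<omega>) (Dv i \<omega>'))^2)"
      unfolding a_def[symmetric] by linarith
  qed simp
  finally show ?thesis unfolding u_def L2_def by (simp add: mult.assoc)
qed

lemma mf_lip:
  assumes "\<omega> \<in> space M" "\<omega>' \<in> space M" "t \<in> {0..T}"
  shows "\<bar>xh i \<omega> t - xh i \<omega>' t\<bar> \<le> Lc * dist (Dv i \<omega>) (Dv i \<omega>')"
proof -
  have "(xh i \<omega> t - xh i \<omega>' t)^2 \<le> L2 * (dist (Dv i \<omega>) (Dv i \<omega>'))^2"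
    using mf_cmp[OF assms] by (smt (verit) zero_le_power2)
  then have "sqrt ((xh i \<omega> t - xh i \<omega>' t)^2) \<le> sqrt (L2 * (dist (Dv i \<omega>) (Dv i \<omega>'))^2)"
    by (rule real_sqrt_le_mono)
  then show ?thesis unfolding Lc_def by (simp add: real_sqrt_mult)
qed

definition "S = Dv i ` space M"
definition "clampT t = max 0 (min T t)"

lemma clampT_in: "clampT t \<in> {0..T}" using T unfolding clampT_def by auto
lemma clampT_id: "t \<in> {0..T} \<Longrightarrow> clampT t = t" unfolding clampT_def by auto
lemma clampT_cont: "continuous_on UNIV clampT" unfolding clampT_def by (intro continuous_intros)

definition "Gt t d = xh i (SOME \<omega>. \<omega> \<in> space M \<and> Dv i \<omega> = d) (clampT t)"

lemma Gt_eq: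
  assumes \<omega>: "\<omega> \<in> space M"
  shows "Gt t (Dv i \<omega>) = xh i \<omega> (clampT t)"
proof -
  define \<omega>' where "\<omega>' = (SOME \<omega>'. \<omega>' \<in> space M \<and> Dv i \<omega>' = Dv i \<omega>)"
  have \<omega>': "\<omega>' \<in> space M \<and> Dv i \<omega>' = Dv i \<omega>"
    unfolding \<omega>'_def by (rule someI[of _ \<omega>]) (use \<omega> in auto)
  have "\<bar>xh i \<omega>' (clampT t) - xh i \<omega> (clampT t)\<bar> \<le> Lc * dist (Dv i \<omega>') (Dv i \<omega>)"
    using mf_lip \<omega> \<omega>' clampT_in by blast
  then show ?thesis using \<omega>' unfolding Gt_def \<omega>'_def[symmetric] by simp
qed

lemma Gt_lip: "Lc-lipschitz_on S (Gt t)"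
proof (rule lipschitz_onI)
  fix d d' assume "d \<in> S" "d' \<in> S"
  then obtain \<omega> \<omega>' where "\<omega> \<in> space M" "\<omega>' \<in> space M" "d = Dv i \<omega>" "d' = Dv i \<omega>'"
    unfolding S_def by auto
  then show "dist (Gt t d) (Gt t d') \<le> Lc * dist d d'"
    using mf_lip[of \<omega> \<omega>' "clampT t"] clampT_in by (simp add: Gt_eq dist_real_def)
qed (rule Lc_nonneg)

definition "ext t = (SOME g. Lc-lipschitz_on (closure S) g \<and> (\<forall>x\<in>S. g x = Gt t x))"

lemma ext: "Lc-lipschitz_on (closure S) (ext t) \<and> (\<forall>x\<in>S. ext t x = Gt t x)"
  unfolding ext_def by (rule someI_ex[of "\<lambda>g. Lc-lipschitz_on (closure S) g \<and> (\<forall>x\<in>S. g x = Gt t x)"]) (rule lipschitz_extend_closure[OF Gt_lip])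

definition "Fd d t = (if d \<in> closure S then ext t d else 0)"

lemma F_D: "\<omega> \<in> space M \<Longrightarrow> Fd (Dv i \<omega>) t = xh i \<omega> (clampT t)"
  using ext[of t] closure_subset[of S] unfolding Fd_def S_def by (auto simp: Gt_eq)

lemma F_D': "\<omega> \<in> space M \<Longrightarrow> t \<in> {0..T} \<Longrightarrow> Fd (Dv i \<omega>) t = xh i \<omega> t"
  by (simp add: F_D clampT_id)

lemma F_lip: "d \<in> closure S \<Longrightarrow> d' \<in> closure S \<Longrightarrow> \<bar>Fd d t - Fd d' t\<bar> \<le> Lc * dist d d'"
  using lipschitz_onD[OF conjunct1[OF ext[of t]]] unfolding Fd_def by (auto simp: dist_real_def)

lemma F_cont_S: "\<omega> \<in> space M \<Longrightarrow> continuous_on UNIV (Fd (Dv i \<omega>))"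
proof -
  assume \<omega>: "\<omega> \<in> space M"
  have "continuous_on UNIV (xh i \<omega> \<circ> clampT)"
    by (rule continuous_on_compose[OF clampT_cont continuous_on_subset[OF xh_cont[OF \<omega>]]])
       (use clampT_in in auto)
  moreover have "Fd (Dv i \<omega>) = xh i \<omega> \<circ> clampT" using F_D[OF \<omega>] by auto
  ultimately show ?thesis by simp
qed

lemma F_joint: "continuous_on (closure S \<times> UNIV) (\<lambda>p. Fd (fst p) (snd p))"
  unfolding continuous_on_iff
proof (intro ballI allI impI)
  fix p :: "((real \<times> real) \<times> (real \<times> real)) \<times> real" and e :: real
  assume p: "p \<in> closure S \<times> UNIV" and e: "0 < e"
  define e' where "e' = e / (9 * (Lc + 1))"
  have e': "0 < e'" unfolding e'_def using e Lc_nonneg by simp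
  obtain s where s: "s \<in> S" "dist s (fst p) < e'"
    using p e' closure_approachable[of "fst p" S] by auto
  then obtain \<omega> where \<omega>: "\<omega> \<in> space M" "s = Dv i \<omega>" unfolding S_def by auto
  have "continuous_on UNIV (Fd s)" using F_cont_S \<omega> by simp
  then obtain r where r: "r > 0" "\<And>t'. dist t' (snd p) < r \<Longrightarrow> dist (Fd s t') (Fd s (snd p)) < e/3"
    unfolding continuous_on_iff using e by (metis UNIV_I divide_pos_pos zero_less_numeral)
  show "\<exists>d>0. \<forall>x'\<in>closure S \<times> UNIV. dist x' p < d \<longrightarrow> dist (Fd (fst x') (snd x')) (Fd (fst p) (snd p)) < e"
  proof (intro exI[of _ "min r e'"] conjI ballI impI)
    show "0 < min r e'" using r e' by simp
    fix q assume q: "q \<in> closure S \<times> UNIV" and dq: "dist q p < min r e'"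
    have d1: "dist (fst q) (fst p) < e'" using dq dist_fst_le[of q p] by linarith
    have d2: "dist (snd q) (snd p) < r" using dq dist_snd_le[of q p] by linarith
    have sS: "s \<in> closure S" using s closure_subset by auto
    have a1: "\<bar>Fd (fst q) (snd q) - Fd s (snd q)\<bar> \<le> Lc * dist (fst q) s"
      using F_lip[OF _ sS] q by auto
    have a2: "\<bar>Fd s (snd q) - Fd s (snd p)\<bar> < e/3" using r(2)[OF d2] by (simp add: dist_real_def)
    have a3: "\<bar>Fd s (snd p) - Fd (fst p) (snd p)\<bar> \<le> Lc * dist s (fst p)"
      using F_lip[OF sS] p by auto
    have "dist (fst q) s \<le> dist (fst q) (fst p) + dist s (fst p)" by (rule dist_triangle2)
    then have "dist (fst q) s < 2 * e'" using d1 s(2) by linarith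
    then have b1: "Lc * dist (fst q) s \<le> Lc * (2 * e')" using Lc_nonneg by (simp add: mult_left_mono)
    have b3: "Lc * dist s (fst p) \<le> Lc * e'" using Lc_nonneg s(2) by (simp add: mult_left_mono)
    have "Lc * (3 * e') \<le> e / 3"
    proof -
      have "Lc * (3 * e') = e / 3 * (Lc / (Lc + 1))" unfolding e'_def using Lc_nonneg by (simp add: field_simps)
      also have "\<dots> \<le> e / 3 * 1" using Lc_nonneg e by (intro mult_left_mono) auto
      finally show ?thesis by simp
    qed
    have tri: "\<bar>Fd (fst q) (snd q) - Fd (fst p) (snd p)\<bar> \<le> \<bar>Fd (fst q) (snd q) - Fd s (snd q)\<bar>
       + \<bar>Fd s (snd q) - Fd s (snd p)\<bar> + \<bar>Fd s (snd p) - Fd (fst p) (snd p)\<bar>" by arith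
    have "Lc * (2 * e') + Lc * e' = Lc * (3 * e')" by (simp add: algebra_simps)
    then show "dist (Fd (fst q) (snd q)) (Fd (fst p) (snd p)) < e"
      using tri a1 a2 a3 b1 b3 e \<open>Lc * (3 * e') \<le> e / 3\<close> unfolding dist_real_def by linarith
  qed
qed

lemma F_meas: "(\<lambda>p. Fd (fst p) (snd p)) \<in> borel_measurable borel"
proof -
  have "(\<lambda>p. if p \<in> closure S \<times> UNIV then Fd (fst p) (snd p) else 0) \<in> borel_measurable borel"
    by (rule borel_measurable_continuous_on_if) (auto intro!: F_joint borel_closed closed_Times)
  moreover have "(\<lambda>p. if p \<in> closure S \<times> UNIV then Fd (fst p) (snd p) else 0) = (\<lambda>p. Fd (fst p) (snd p))"
    by (auto simp: fun_eq_iff Fd_def)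
  ultimately show ?thesis by simp
qed

lemma F_cont_t: "continuous_on UNIV (Fd d)"
proof (cases "d \<in> closure S")
  case True
  have "continuous_on UNIV ((\<lambda>p. Fd (fst p) (snd p)) \<circ> (\<lambda>t. (d, t)))"
    by (rule continuous_on_compose[OF _ continuous_on_subset[OF F_joint]]) (use True in \<open>auto intro!: continuous_intros\<close>)
  then show ?thesis by (simp add: comp_def)
next
  case False
  then have "Fd d = (\<lambda>_. 0)" by (auto simp: Fd_def fun_eq_iff)
  then show ?thesis by simp
qed

lemma F_Dmeas[measurable]: "(\<lambda>\<omega>. Fd (Dv j \<omega>) t) \<in> borel_measurable M"
  using measurable_compose[OF _ F_meas, of "\<lambda>\<omega>. (Dv j \<omega>, t)" M] by simp

end

lemma sq_diff_le: "(p - q)^2 \<le> 2*p^2 + 2*(q::real)^2"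
proof -
  have "2*p^2 + 2*q^2 - (p - q)^2 = (p+q)^2" by (simp add: power2_eq_square algebra_simps)
  moreover have "0 \<le> (p+q)^2" by simp
  ultimately show ?thesis by linarith
qed

lemma le_one_plus_sq: "(z::real) \<le> 1 + z^2"
proof -
  have "1 + z^2 - z = (z - 1/2)^2 + 3/4" by (simp add: power2_eq_square algebra_simps)
  moreover have "0 \<le> (z - 1/2)^2" by simp
  ultimately show ?thesis by linarith
qed

lemma sq_le_of_abs_le: "\<bar>(a::real)\<bar> \<le> b \<Longrightarrow> a^2 \<le> b^2"
  by (metis abs_ge_zero power2_abs power_mono)

context fhn
begin

definition "mm t = expectation (\<lambda>\<omega>. Fd (Dv i \<omega>) t)"

lemma mm_eq: "t \<in> {0..T} \<Longrightarrow> expectation (\<lambda>\<omega>. xh i \<omega> t) = mm t"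
  unfolding mm_def by (rule Bochner_Integration.integral_cong) (auto simp: F_D')

definition "\<omega>0 = (SOME \<omega>. \<omega> \<in> space M)"
lemma \<omega>0: "\<omega>0 \<in> space M" unfolding \<omega>0_def using not_empty by (simp add: some_in_eq)
definition "d0 = Dv i \<omega>0"

definition "B0 = (SOME B. 0 \<le> B \<and> (\<forall>t\<in>{0..T}. \<bar>xh i \<omega>0 t\<bar> \<le> B))"
lemma B0: "0 \<le> B0 \<and> (\<forall>t\<in>{0..T}. \<bar>xh i \<omega>0 t\<bar> \<le> B0)"
proof -
  have "compact (xh i \<omega>0 ` {0..T})" by (rule compact_continuous_image[OF xh_cont[OF \<omega>0]]) simp
  then obtain B where "\<forall>v\<in>xh i \<omega>0 ` {0..T}. norm v \<le> B" using compact_imp_bounded bounded_iff by metis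
  then have "0 \<le> max B 0 \<and> (\<forall>t\<in>{0..T}. \<bar>xh i \<omega>0 t\<bar> \<le> max B 0)" by force
  then show ?thesis unfolding B0_def by (rule someI)
qed

lemma F_bound: "\<bar>Fd d t\<bar> \<le> B0 + Lc * dist d d0"
proof (cases "d \<in> closure S")
  case True
  have d0S: "d0 \<in> closure S" unfolding d0_def S_def using \<omega>0 closure_subset[of "Dv i ` space M"] by auto
  have "\<bar>Fd d t\<bar> \<le> \<bar>Fd d t - Fd d0 t\<bar> + \<bar>Fd d0 t\<bar>" by arith
  also have "\<bar>Fd d0 t\<bar> = \<bar>xh i \<omega>0 (clampT t)\<bar>" unfolding d0_def by (simp add: F_D \<omega>0)
  also have "\<dots> \<le> B0" using B0 clampT_in by blast
  finally show ?thesis using F_lip[OF True d0S, of t] by linarith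
next
  case False
  then show ?thesis using B0 Lc_nonneg by (simp add: Fd_def)
qed

definition "hW d = (B0 + Lc * dist d d0)^2"

lemma hW_meas[measurable]: "hW \<in> borel_measurable borel"
  unfolding hW_def by (intro borel_measurable_continuous_onI continuous_intros)

lemma int_sq_I: "integrable M (\<lambda>\<omega>. (I j \<omega>)^2)"
  using distributed_integrable[OF gauss[of j], of "\<lambda>x. x^2"] integrable_std_normal_moment[of 2]
  by (simp add: std_normal_density_def)

lemma int_sq_x0: "integrable M (\<lambda>\<omega>. (x0 j \<omega>)^2)"
proof -
  have h: "(\<lambda>p::real\<times>real. (fst p)^2) \<in> borel_measurable borel" by (intro borel_measurable_continuous_onI continuous_intros)
  have "integrable (distr M borel (Qv k)) (\<lambda>p. (fst p)^2) = integrable M (\<lambda>\<omega>. (x0 k \<omega>)^2)" for k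
    by (subst integrable_distr_eq) (auto simp: Qv_def h)
  then show ?thesis using mom_x distr_Q[of j] distr_Q[of 0] by metis
qed

lemma int_sq_y0: "integrable M (\<lambda>\<omega>. (y0 j \<omega>)^2)"
proof -
  have h: "(\<lambda>p::real\<times>real. (snd p)^2) \<in> borel_measurable borel" by (intro borel_measurable_continuous_onI continuous_intros)
  have "integrable (distr M borel (Qv k)) (\<lambda>p. (snd p)^2) = integrable M (\<lambda>\<omega>. (y0 k \<omega>)^2)" for k
    by (subst integrable_distr_eq) (auto simp: Qv_def h)
  then show ?thesis using mom_y distr_Q[of j] distr_Q[of 0] by metis
qed

lemma int_hW: "integrable M (\<lambda>\<omega>. hW (Dv j \<omega>))"
proof -
  define a b c where "a = I i \<omega>0" "b = x0 i \<omega>0" "c = y0 i \<omega>0"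
  have int: "integrable M (\<lambda>\<omega>. 2*B0^2 + 2*Lc^2 * (2*(I j \<omega>)^2 + 2*a^2 + 2*(x0 j \<omega>)^2 + 2*b^2 + 2*(y0 j \<omega>)^2 + 2*c^2))"
    using int_sq_I int_sq_x0 int_sq_y0 by auto
  have le: "hW (Dv j \<omega>) \<le> 2*B0^2 + 2*Lc^2 * (2*(I j \<omega>)^2 + 2*a^2 + 2*(x0 j \<omega>)^2 + 2*b^2 + 2*(y0 j \<omega>)^2 + 2*c^2)" for \<omega>
  proof -
    have "hW (Dv j \<omega>) \<le> 2*B0^2 + 2*(Lc * dist (Dv j \<omega>) d0)^2"
      unfolding hW_def using sum_squares_bound[of B0 "Lc * dist (Dv j \<omega>) d0"] by (simp add: power2_sum)
    also have "(Lc * dist (Dv j \<omega>) d0)^2 = Lc^2 * ((I j \<omega> - a)^2 + (x0 j \<omega> - b)^2 + (y0 j \<omega> - c)^2)"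
      unfolding d0_def a_b_c_def power_mult_distrib dist_D_sq ..
    also have "\<dots> \<le> Lc^2 * (2*(I j \<omega>)^2 + 2*a^2 + 2*(x0 j \<omega>)^2 + 2*b^2 + 2*(y0 j \<omega>)^2 + 2*c^2)"
    proof (rule mult_left_mono)
      note sq_diff_le
      then show "(I j \<omega> - a)^2 + (x0 j \<omega> - b)^2 + (y0 j \<omega> - c)^2 \<le> 2*(I j \<omega>)^2 + 2*a^2 + 2*(x0 j \<omega>)^2 + 2*b^2 + 2*(y0 j \<omega>)^2 + 2*c^2"
        using sq_diff_le[of "I j \<omega>" a] sq_diff_le[of "x0 j \<omega>" b] sq_diff_le[of "y0 j \<omega>" c] by linarith
    qed simp
    finally show ?thesis by simp
  qed
  show ?thesis
    using le hW_def
    by (intro Bochner_Integration.integrable_bound[OF int]) (auto intro!: AE_I2 simp: hW_def)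
qed

lemma int_W1: "integrable M (\<lambda>\<omega>. B0 + Lc * dist (Dv j \<omega>) d0)"
proof (rule Bochner_Integration.integrable_bound[of _ "\<lambda>\<omega>. 1 + hW (Dv j \<omega>)"])
  show "integrable M (\<lambda>\<omega>. 1 + hW (Dv j \<omega>))" using int_hW by auto
  show "(\<lambda>\<omega>. B0 + Lc * dist (Dv j \<omega>) d0) \<in> borel_measurable M" by measurable
  show "AE \<omega> in M. norm (B0 + Lc * dist (Dv j \<omega>) d0) \<le> norm (1 + hW (Dv j \<omega>))"
  proof (intro AE_I2)
    fix \<omega>
    have z: "0 \<le> B0 + Lc * dist (Dv j \<omega>) d0" using B0 Lc_nonneg by simp
    have "B0 + Lc * dist (Dv j \<omega>) d0 \<le> 1 + hW (Dv j \<omega>)" unfolding hW_def by (rule le_one_plus_sq)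
    then show "norm (B0 + Lc * dist (Dv j \<omega>) d0) \<le> norm (1 + hW (Dv j \<omega>))"
      using z by simp
  qed
qed

lemma int_F: "integrable M (\<lambda>\<omega>. Fd (Dv j \<omega>) t)"
  by (rule Bochner_Integration.integrable_bound[OF int_W1[of j]]) (auto intro!: AE_I2 simp: F_bound order_trans[OF F_bound] B0 Lc_nonneg)

lemma mm_cont: "continuous_on UNIV mm"
proof (rule continuous_on_sequentiallyI)
  fix u :: "nat \<Rightarrow> real" and a assume u: "u \<longlonglongrightarrow> a"
  show "(\<lambda>n. mm (u n)) \<longlonglongrightarrow> mm a"
    unfolding mm_def
  proof (rule integral_dominated_convergence[where w="\<lambda>\<omega>. B0 + Lc * dist (Dv i \<omega>) d0"])
    show "integrable M (\<lambda>\<omega>. B0 + Lc * dist (Dv i \<omega>) d0)" by (rule int_W1)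
    show "AE \<omega> in M. (\<lambda>n. Fd (Dv i \<omega>) (u n)) \<longlonglongrightarrow> Fd (Dv i \<omega>) a"
      using F_cont_t u by (auto intro!: AE_I2 simp: continuous_on_sequentially comp_def)
    show "AE \<omega> in M. norm (Fd (Dv i \<omega>) (u n)) \<le> B0 + Lc * dist (Dv i \<omega>) d0" for n
      using F_bound by auto
  qed auto
qed

definition "Yv t j \<omega> = Fd (Dv j \<omega>) t - mm t"

lemma Yv_meas[measurable]: "Yv t j \<in> borel_measurable M" unfolding Yv_def by measurable

lemma Fd_t_meas[measurable]: "(\<lambda>d. Fd d t) \<in> borel_measurable borel"
  using measurable_compose[OF _ F_meas, of "\<lambda>d. (d, t)" borel] by simp

lemma E_Yv: "expectation (Yv t j) = 0"
proof -
  have "expectation (\<lambda>\<omega>. Fd (Dv j \<omega>) t) = mm t" unfolding mm_def by (rule integral_D) simp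
  then show ?thesis unfolding Yv_def using int_F by (simp add: prob_space)
qed

definition "Vb = 2 * expectation (\<lambda>\<omega>. hW (Dv i \<omega>)) + 2 * (expectation (\<lambda>\<omega>. B0 + Lc * dist (Dv i \<omega>) d0))^2"

lemma int_Yv_sq: "integrable M (\<lambda>\<omega>. (Yv t j \<omega>)^2)"
proof (rule Bochner_Integration.integrable_bound[of _ "\<lambda>\<omega>. 2 * hW (Dv j \<omega>) + 2 * (mm t)^2"])
  show "integrable M (\<lambda>\<omega>. 2 * hW (Dv j \<omega>) + 2 * (mm t)^2)" using int_hW by auto
  show "AE \<omega> in M. norm ((Yv t j \<omega>)^2) \<le> norm (2 * hW (Dv j \<omega>) + 2 * (mm t)^2)"
  proof (intro AE_I2)
    fix \<omega>
    have "(Fd (Dv j \<omega>) t)^2 \<le> hW (Dv j \<omega>)" unfolding hW_def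
      using F_bound[of "Dv j \<omega>" t] by (rule sq_le_of_abs_le)
    moreover have "(Yv t j \<omega>)^2 \<le> 2 * (Fd (Dv j \<omega>) t)^2 + 2 * (mm t)^2"
      unfolding Yv_def by (rule sq_diff_le)
    ultimately show "norm ((Yv t j \<omega>)^2) \<le> norm (2 * hW (Dv j \<omega>) + 2 * (mm t)^2)"
      by (simp add: hW_def)
  qed
qed simp

lemma E_Yv_sq: "expectation (\<lambda>\<omega>. (Yv t j \<omega>)^2) \<le> Vb"
proof -
  have mm_b: "\<bar>mm t\<bar> \<le> expectation (\<lambda>\<omega>. B0 + Lc * dist (Dv i \<omega>) d0)"
    unfolding mm_def
    by (rule order_trans[OF integral_abs_bound]) (intro Bochner_Integration.integral_mono int_W1 integrable_abs int_F, simp add: F_bound)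
  have "expectation (\<lambda>\<omega>. (Yv t j \<omega>)^2) \<le> expectation (\<lambda>\<omega>. 2 * hW (Dv j \<omega>) + 2 * (mm t)^2)"
  proof (rule Bochner_Integration.integral_mono[OF int_Yv_sq])
    show "integrable M (\<lambda>\<omega>. 2 * hW (Dv j \<omega>) + 2 * (mm t)^2)" using int_hW by auto
    fix \<omega>
    have "(Fd (Dv j \<omega>) t)^2 \<le> hW (Dv j \<omega>)" unfolding hW_def
      using F_bound[of "Dv j \<omega>" t] by (rule sq_le_of_abs_le)
    moreover have "(Yv t j \<omega>)^2 \<le> 2 * (Fd (Dv j \<omega>) t)^2 + 2 * (mm t)^2"
      unfolding Yv_def by (rule sq_diff_le)
    ultimately show "(Yv t j \<omega>)^2 \<le> 2 * hW (Dv j \<omega>) + 2 * (mm t)^2" by simp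
  qed
  also have "\<dots> = 2 * expectation (\<lambda>\<omega>. hW (Dv j \<omega>)) + 2 * (mm t)^2"
    using int_hW by (simp add: prob_space)
  also have "expectation (\<lambda>\<omega>. hW (Dv j \<omega>)) = expectation (\<lambda>\<omega>. hW (Dv i \<omega>))"
    by (rule integral_D) simp
  also have "(mm t)^2 \<le> (expectation (\<lambda>\<omega>. B0 + Lc * dist (Dv i \<omega>) d0))^2"
    using mm_b by (rule sq_le_of_abs_le)
  finally show ?thesis unfolding Vb_def by simp
qed

lemma E_Yv_cross:
  assumes "j \<noteq> k"
  shows "integrable M (\<lambda>\<omega>. Yv t j \<omega> * Yv t k \<omega>)" "expectation (\<lambda>\<omega>. Yv t j \<omega> * Yv t k \<omega>) = 0"
proof -
  have ind: "indep_var borel (Yv t j) borel (Yv t k)"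
    using indep_var_compose[OF indep_D[OF assms], of "\<lambda>d. Fd d t - mm t" borel "\<lambda>d. Fd d t - mm t" borel]
    by (simp add: comp_def Yv_def[abs_def])
  have ij: "integrable M (Yv t l)" for l unfolding Yv_def[abs_def] using int_F by auto
  show "integrable M (\<lambda>\<omega>. Yv t j \<omega> * Yv t k \<omega>)" by (rule indep_var_integrable[OF ind ij ij])
  show "expectation (\<lambda>\<omega>. Yv t j \<omega> * Yv t k \<omega>) = 0"
    using indep_var_lebesgue_integral[OF ind ij ij] by (simp add: E_Yv)
qed

definition "Av N \<omega> t = (\<Sum>j<N. Fd (Dv j \<omega>) t) / real N - mm t"

lemma Av_Yv: "N \<ge> 1 \<Longrightarrow> Av N \<omega> t = (\<Sum>j<N. Yv t j \<omega>) / real N"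
  unfolding Av_def Yv_def by (simp add: sum_subtractf field_simps)

lemma E_Av_sq:
  assumes N: "N \<ge> 1"
  shows "integrable M (\<lambda>\<omega>. (Av N \<omega> t)^2)" "expectation (\<lambda>\<omega>. (Av N \<omega> t)^2) \<le> Vb / real N"
proof -
  have sq: "(\<Sum>j<N. Yv t j \<omega>)^2 = (\<Sum>j<N. \<Sum>k<N. Yv t j \<omega> * Yv t k \<omega>)" for \<omega>
    by (simp add: power2_eq_square sum_product)
  have intjk: "integrable M (\<lambda>\<omega>. Yv t j \<omega> * Yv t k \<omega>)" for j k
    by (cases "j = k") (use int_Yv_sq E_Yv_cross in \<open>auto simp: power2_eq_square\<close>)
  have int_sum: "integrable M (\<lambda>\<omega>. (\<Sum>j<N. Yv t j \<omega>)^2)"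
    unfolding sq using intjk by auto
  have eq: "(\<lambda>\<omega>. (Av N \<omega> t)^2) = (\<lambda>\<omega>. (\<Sum>j<N. Yv t j \<omega>)^2 / (real N)^2)"
    using Av_Yv[OF N] by (simp add: power_divide)
  show "integrable M (\<lambda>\<omega>. (Av N \<omega> t)^2)" unfolding eq using int_sum by auto
  have "expectation (\<lambda>\<omega>. (\<Sum>j<N. Yv t j \<omega>)^2) = (\<Sum>j<N. \<Sum>k<N. expectation (\<lambda>\<omega>. Yv t j \<omega> * Yv t k \<omega>))"
    unfolding sq using intjk by (simp add: integral_sum)
  also have "\<dots> = (\<Sum>j<N. expectation (\<lambda>\<omega>. (Yv t j \<omega>)^2))"
  proof (rule sum.cong[OF refl])
    fix j assume j: "j \<in> {..<N}"
    have "(\<Sum>k<N. expectation (\<lambda>\<omega>. Yv t j \<omega> * Yv t k \<omega>)) = (\<Sum>k\<in>{j}. expectation (\<lambda>\<omega>. Yv t j \<omega> * Yv t k \<omega>))"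
      by (rule sum.mono_neutral_right) (use j E_Yv_cross in auto)
    then show "(\<Sum>k<N. expectation (\<lambda>\<omega>. Yv t j \<omega> * Yv t k \<omega>)) = expectation (\<lambda>\<omega>. (Yv t j \<omega>)^2)"
      by (simp add: power2_eq_square)
  qed
  also have "\<dots> \<le> (\<Sum>j<N. Vb)" by (rule sum_mono) (rule E_Yv_sq)
  finally have "expectation (\<lambda>\<omega>. (\<Sum>j<N. Yv t j \<omega>)^2) \<le> real N * Vb" by simp
  then have "expectation (\<lambda>\<omega>. (\<Sum>j<N. Yv t j \<omega>)^2) / (real N)^2 \<le> real N * Vb / (real N)^2"
    by (simp add: divide_right_mono)
  also have "real N * Vb / (real N)^2 = Vb / real N" using N by (simp add: power2_eq_square)
  finally show "expectation (\<lambda>\<omega>. (Av N \<omega> t)^2) \<le> Vb / real N" unfolding eq by simp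
qed

end

lemma sq3_le: "((a::real) + b + c)^2 \<le> 3*a^2 + 3*b^2 + 3*c^2"
proof -
  have "3*a^2 + 3*b^2 + 3*c^2 - (a + b + c)^2 = (a-b)^2 + (b-c)^2 + (a-c)^2"
    by (simp add: power2_eq_square algebra_simps)
  moreover have "0 \<le> (a-b)^2 + (b-c)^2 + (a-c)^2" by simp
  ultimately show ?thesis by linarith
qed

lemma sq_add_le: "((a::real) + b)^2 \<le> 2*a^2 + 2*b^2"
  using sq_diff_le[of a "-b"] by simp

lemma int_lin:
  fixes f :: "real \<Rightarrow> real"
  assumes "f integrable_on {0..T}" "0 \<le> T"
  shows "integral {0..T} (\<lambda>s. a * f s + b) = a * integral {0..T} f + b * T"
proof -
  have "(\<lambda>s. a * f s) integrable_on {0..T}" using integrable_on_cmult_left[OF assms(1), of a] by simp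
  then have "integral {0..T} (\<lambda>s. a * f s + b) = integral {0..T} (\<lambda>s. a * f s) + integral {0..T} (\<lambda>s. b)"
    by (intro integral_add) auto
  then show ?thesis using assms(2) by (simp add: mult.commute)
qed

context fhn
begin

definition "C1 = Cz + 3*\<epsilon>^2"
definition "K1 = exp (Cz*T) * (3*\<epsilon>^2 * T * exp (C1*T) * (6*\<epsilon>^2) + 6*\<epsilon>^2)"
definition "K2 = exp (Cz*T) * (3*\<epsilon>^2 * T * exp (C1*T) * (1 + 6*\<epsilon>^2*T*Lc^2 + 3*\<sigma>^2*T) + 6*\<epsilon>^2*T*Lc^2)"

lemma C1_nonneg: "0 \<le> C1" unfolding C1_def using Cz_nonneg by simp

lemma Av_cont: "continuous_on A (Av N \<omega>)"
proof -
  have eq: "Av N \<omega> = (\<lambda>s. (1 / real N) * (\<Sum>j<N. Fd (Dv j \<omega>) s) - mm s)"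
    by (auto simp: Av_def fun_eq_iff)
  show ?thesis unfolding eq
    by (intro continuous_intros continuous_on_subset[OF F_cont_t subset_UNIV] continuous_on_subset[OF mm_cont subset_UNIV])
qed

lemma pathwise_eta:
  assumes N: "1 \<le> N" "i < N" and \<omega>: "\<omega> \<in> space M" and \<eta>: "0 < \<eta>"
    and w_sp: "\<And>j. j < N \<Longrightarrow> w j \<in> space M"
    and w_d: "\<And>j. j < N \<Longrightarrow> dist (Dv i (w j)) (Dv j \<omega>) \<le> \<eta>"
    and w_i: "w i = \<omega>"
    and good: "\<And>j. j < N \<Longrightarrow> Dv j \<omega> \<in> closure S"
    and t: "t \<in> {0..T}"
  shows "(x N i \<omega> t - xh i \<omega> t)^2 + (y N i \<omega> t - yh i \<omega> t)^2
          \<le> K1 * integral {0..T} (\<lambda>s. (Av N \<omega> s)^2) + K2 * \<eta>^2"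
proof -
  define p where "p j s = xh i (w j) s" for j s
  define q where "q j s = yh i (w j) s" for j s
  define uu where "uu j s = (x N j \<omega> s - p j s)^2 + (y N j \<omega> s - q j s)^2" for j s
  define U where "U s = (\<Sum>j<N. uu j s) / real N" for s
  define At where "At s = (\<Sum>k<N. p k s) / real N - mm s" for s
  define Q where "Q = integral {0..T} (\<lambda>s. (Av N \<omega> s)^2)"
  define Qt where "Qt = integral {0..T} (\<lambda>s. (At s)^2)"
  have Npos: "0 < real N" using N by simp
  have T0: "0 \<le> T" using T by simp

  have At_close: "\<bar>At s - Av N \<omega> s\<bar> \<le> Lc * \<eta>" if s: "s \<in> {0..T}" for s
  proof -
    have k_le: "\<bar>p k s - Fd (Dv k \<omega>) s\<bar> \<le> Lc * \<eta>" if k: "k < N" for k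
    proof -
      have "p k s = Fd (Dv i (w k)) s" unfolding p_def using F_D'[OF w_sp[OF k] s] by simp
      moreover have "Dv i (w k) \<in> closure S"
        using w_sp[OF k] closure_subset[of S] unfolding S_def by blast
      ultimately have "\<bar>p k s - Fd (Dv k \<omega>) s\<bar> \<le> Lc * dist (Dv i (w k)) (Dv k \<omega>)"
        using F_lip[of "Dv i (w k)" "Dv k \<omega>" s] good[OF k] by simp
      also have "Lc * dist (Dv i (w k)) (Dv k \<omega>) \<le> Lc * \<eta>"
        by (rule mult_left_mono[OF w_d[OF k] Lc_nonneg])
      finally show ?thesis .
    qed
    have e1: "At s - Av N \<omega> s = (\<Sum>k<N. p k s - Fd (Dv k \<omega>) s) / real N"
      unfolding At_def Av_def by (simp add: sum_subtractf diff_divide_distrib)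
    have e2: "\<bar>\<Sum>k<N. p k s - Fd (Dv k \<omega>) s\<bar> \<le> (\<Sum>k<N. \<bar>p k s - Fd (Dv k \<omega>) s\<bar>)"
      by (rule sum_abs)
    have e3: "(\<Sum>k<N. \<bar>p k s - Fd (Dv k \<omega>) s\<bar>) \<le> (\<Sum>k<N. Lc * \<eta>)"
      by (rule sum_mono) (use k_le in simp)
    have e4: "(\<Sum>k<N. Lc * \<eta>) = real N * (Lc * \<eta>)" by simp
    have "\<bar>\<Sum>k<N. p k s - Fd (Dv k \<omega>) s\<bar> \<le> real N * (Lc * \<eta>)" using e2 e3 e4 by linarith
    then show ?thesis unfolding e1 abs_divide using Npos by (simp add: pos_divide_le_eq mult.commute)
  qed
  have At_sq: "(At s)^2 \<le> 2*(Av N \<omega> s)^2 + 2*(Lc*\<eta>)^2" if s: "s \<in> {0..T}" for s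
  proof -
    have "(At s)^2 = (Av N \<omega> s + (At s - Av N \<omega> s))^2" by simp
    also have "\<dots> \<le> 2*(Av N \<omega> s)^2 + 2*(At s - Av N \<omega> s)^2" by (rule sq_add_le)
    also have "(At s - Av N \<omega> s)^2 \<le> (Lc*\<eta>)^2" using At_close[OF s] by (rule sq_le_of_abs_le)
    finally show ?thesis by simp
  qed
  have p_cont: "continuous_on {0..T} (p k)" if "k < N" for k
    unfolding p_def[abs_def] using xh_cont w_sp that by simp
  have At_cont: "continuous_on {0..T} At"
    unfolding At_def[abs_def] using p_cont N
    by (intro continuous_intros continuous_on_subset[OF mm_cont]) auto
  have At2_int: "(\<lambda>s. (At s)^2) integrable_on {0..T}"
    by (intro integrable_continuous_interval continuous_intros At_cont)
  have Av2_int: "(\<lambda>s. (Av N \<omega> s)^2) integrable_on {0..T}"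
    by (intro integrable_continuous_interval continuous_intros Av_cont)
  have Q0: "0 \<le> Q" unfolding Q_def by (intro integral_nonneg Av2_int) simp
  have Qt0: "0 \<le> Qt" unfolding Qt_def by (intro integral_nonneg At2_int) simp
  have Qt_le: "Qt \<le> 2*Q + 2*T*(Lc*\<eta>)^2"
  proof -
    have "Qt \<le> integral {0..T} (\<lambda>s. 2*(Av N \<omega> s)^2 + 2*(Lc*\<eta>)^2)"
      unfolding Qt_def using At_sq
      by (intro integral_le At2_int integrable_continuous_interval continuous_intros Av_cont) auto
    also have "\<dots> = 2*Q + 2*T*(Lc*\<eta>)^2"
      unfolding Q_def using int_lin[OF Av2_int T0, of 2 "2*(Lc*\<eta>)^2"] by (simp add: mult.commute mult.left_commute)
    finally show ?thesis .
  qed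

  define Xd where "Xd j s = \<xi> * x N j \<omega> s + \<delta> * (x N j \<omega> s)^3 + \<nu> * y N j \<omega> s
      + (\<epsilon> * ((\<Sum>k<N. x N k \<omega> s) / real N) + \<mu> + \<sigma> * I j \<omega>)" for j s
  define Pd where "Pd j s = \<xi> * p j s + \<delta> * (p j s)^3 + \<nu> * q j s + (\<epsilon> * mm s + \<mu> + \<sigma> * I i (w j))" for j s
  define Yd where "Yd j s = \<alpha> * (x N j \<omega> s + \<beta> * y N j \<omega> s + \<gamma>)" for j s
  define Qd where "Qd j s = \<alpha> * (p j s + \<beta> * q j s + \<gamma>)" for j s
  define Dd where "Dd j s = 2*(x N j \<omega> s - p j s)*(Xd j s - Pd j s) + 2*(y N j \<omega> s - q j s)*(Yd j s - Qd j s)" for j s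

  have dd: "(uu j has_real_derivative Dd j s) (at s within {0..T})" if j: "j < N" and s: "s \<in> {0..T}" for j s
  proof -
    have "(x N j \<omega> has_real_derivative Xd j s) (at s within {0..T})"
      using ode_x[OF N(1) j \<omega> s] unfolding Xd_def by (simp add: add.assoc)
    moreover have "(p j has_real_derivative Pd j s) (at s within {0..T})"
      using mf_x[OF w_sp[OF j] s, of i] mm_eq[OF s] unfolding Pd_def p_def[abs_def] q_def by (simp add: add.assoc)
    moreover have "(y N j \<omega> has_real_derivative Yd j s) (at s within {0..T})"
      using ode_y[OF N(1) j \<omega> s] unfolding Yd_def by simp
    moreover have "(q j has_real_derivative Qd j s) (at s within {0..T})"
      using mf_y[OF w_sp[OF j] s, of i] unfolding Qd_def p_def q_def[abs_def] by simp
    ultimately show ?thesis unfolding uu_def[abs_def] Dd_def by (rule u_deriv)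
  qed

  have Dd_le: "Dd j s \<le> Cz * uu j s + 3*\<epsilon>^2 * U s + 3*\<epsilon>^2 * (At s)^2 + 3*\<sigma>^2 * (I j \<omega> - I i (w j))^2"
    if j: "j < N" and s: "s \<in> {0..T}" for j s
  proof -
    define a1 where "a1 = \<epsilon> * ((\<Sum>k<N. x N k \<omega> s) / real N) + \<mu> + \<sigma> * I j \<omega>"
    define a2 where "a2 = \<epsilon> * mm s + \<mu> + \<sigma> * I i (w j)"
    have "Dd j s \<le> Cz * uu j s + (a1 - a2)^2"
      unfolding Dd_def Xd_def Pd_def Yd_def Qd_def uu_def a1_def[symmetric] a2_def[symmetric] Cz_def
      by (rule energy) (use delta in simp)
    also have "a1 - a2 = \<epsilon> * ((\<Sum>k<N. x N k \<omega> s - p k s) / real N) + \<epsilon> * At s + \<sigma> * (I j \<omega> - I i (w j))"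
      unfolding a1_def a2_def At_def sum_subtractf diff_divide_distrib by (simp add: algebra_simps)
    also have "(\<dots>)^2 \<le> 3*(\<epsilon> * ((\<Sum>k<N. x N k \<omega> s - p k s) / real N))^2 + 3*(\<epsilon> * At s)^2 + 3*(\<sigma> * (I j \<omega> - I i (w j)))^2"
      by (rule sq3_le)
    also have "(\<epsilon> * ((\<Sum>k<N. x N k \<omega> s - p k s) / real N))^2 \<le> \<epsilon>^2 * U s"
    proof -
      have "((\<Sum>k<N. x N k \<omega> s - p k s))^2 \<le> (\<Sum>k<N. (x N k \<omega> s - p k s)^2) * real N"
        using sum_squared_le_sum_of_squares[of "\<lambda>k. x N k \<omega> s - p k s" "{..<N}"] by simp
      also have "\<dots> \<le> (\<Sum>k<N. uu k s) * real N"
        unfolding uu_def by (intro mult_right_mono sum_mono) auto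
      finally have "((\<Sum>k<N. x N k \<omega> s - p k s) / real N)^2 \<le> (\<Sum>k<N. uu k s) * real N / (real N)^2"
        by (simp add: power_divide divide_right_mono)
      also have "\<dots> = U s" unfolding U_def using Npos by (simp add: power2_eq_square)
      finally have h: "((\<Sum>k<N. x N k \<omega> s - p k s) / real N)^2 \<le> U s" .
      have "(\<epsilon> * ((\<Sum>k<N. x N k \<omega> s - p k s) / real N))^2 = \<epsilon>^2 * ((\<Sum>k<N. x N k \<omega> s - p k s) / real N)^2"
        by (rule power_mult_distrib)
      then show ?thesis using mult_left_mono[OF h, of "\<epsilon>^2"] by simp
    qed
    finally show ?thesis by (simp add: power_mult_distrib)
  qed

  have uu0: "0 \<le> uu j s" for j s unfolding uu_def by simp
  have U0: "0 \<le> U s" for s unfolding U_def using uu0 by (simp add: sum_nonneg)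

  define f1 where "f1 s = 3*\<epsilon>^2 * (At s)^2 + 3*\<sigma>^2 * \<eta>^2" for s
  define Ub where "Ub = exp (C1*T) * (\<eta>^2 + (3*\<epsilon>^2 * Qt + 3*\<sigma>^2*\<eta>^2 * T))"
  have U_le: "U s \<le> Ub" if s: "s \<in> {0..T}" for s
  proof -
    have "U s \<le> exp (C1*T) * (U 0 + integral {0..T} f1)"
    proof (rule gronwall[OF C1_nonneg T0 _ _ _ _ _ s])
      fix r assume r: "r \<in> {0..T}"
      show "(U has_real_derivative (\<Sum>j<N. Dd j r) / real N) (at r within {0..T})"
        unfolding U_def[abs_def] by (intro DERIV_cdivide DERIV_sum dd r) auto
      have "(\<Sum>j<N. Dd j r) \<le> (\<Sum>j<N. Cz * uu j r + 3*\<epsilon>^2 * U r + 3*\<epsilon>^2 * (At r)^2 + 3*\<sigma>^2 * \<eta>^2)"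
      proof (rule sum_mono)
        fix j assume j: "j \<in> {..<N}"
        have "(I j \<omega> - I i (w j))^2 \<le> (dist (Dv i (w j)) (Dv j \<omega>))^2"
          unfolding dist_D_sq by (simp add: power2_commute)
        also have "\<dots> \<le> \<eta>^2" using w_d j by (simp add: power_mono)
        finally have "3*\<sigma>^2 * (I j \<omega> - I i (w j))^2 \<le> 3*\<sigma>^2 * \<eta>^2" by (simp add: mult_left_mono)
        then show "Dd j r \<le> Cz * uu j r + 3*\<epsilon>^2 * U r + 3*\<epsilon>^2 * (At r)^2 + 3*\<sigma>^2 * \<eta>^2"
          using Dd_le[of j r] j r by simp
      qed
      also have "\<dots> = Cz * (\<Sum>j<N. uu j r) + real N * (3*\<epsilon>^2 * U r + 3*\<epsilon>^2 * (At r)^2 + 3*\<sigma>^2 * \<eta>^2)"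
        by (simp add: sum.distrib sum_distrib_left algebra_simps)
      finally have "(\<Sum>j<N. Dd j r) / real N \<le> (Cz * (\<Sum>j<N. uu j r) + real N * (3*\<epsilon>^2 * U r + 3*\<epsilon>^2 * (At r)^2 + 3*\<sigma>^2 * \<eta>^2)) / real N"
        by (simp add: divide_right_mono)
      also have "\<dots> = C1 * U r + f1 r"
        unfolding C1_def f1_def U_def using Npos by (simp add: field_simps)
      finally show "(\<Sum>j<N. Dd j r) / real N \<le> C1 * U r + f1 r" .
    next
      show "continuous_on {0..T} f1" unfolding f1_def by (intro continuous_intros At_cont)
    next
      show "0 \<le> f1 r" for r unfolding f1_def by simp
    next
      show "0 \<le> U 0" by (rule U0)
    qed
    also have "U 0 \<le> \<eta>^2"
    proof -
      have "uu j 0 \<le> \<eta>^2" if j: "j < N" for j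
      proof -
        have "uu j 0 = (x0 j \<omega> - x0 i (w j))^2 + (y0 j \<omega> - y0 i (w j))^2"
          unfolding uu_def p_def q_def using init[OF N(1) j \<omega>] mf_init[OF w_sp[OF j]] by simp
        also have "\<dots> \<le> (dist (Dv i (w j)) (Dv j \<omega>))^2" unfolding dist_D_sq by (simp add: power2_commute)
        also have "\<dots> \<le> \<eta>^2" using w_d j by (simp add: power_mono)
        finally show ?thesis .
      qed
      then have "(\<Sum>j<N. uu j 0) \<le> real N * \<eta>^2" using sum_mono[of "{..<N}" "\<lambda>j. uu j 0" "\<lambda>_. \<eta>^2"] by simp
      then show ?thesis unfolding U_def using Npos by (simp add: divide_le_eq mult.commute)
    qed
    also have "integral {0..T} f1 = 3*\<epsilon>^2 * Qt + 3*\<sigma>^2*\<eta>^2 * T"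
      unfolding f1_def Qt_def using int_lin[OF At2_int T0] by simp
    finally show ?thesis unfolding Ub_def by (simp add: mult_left_mono)
  qed

  define f2 where "f2 s = 3*\<epsilon>^2 * Ub + 3*\<epsilon>^2 * (At s)^2" for s
  have "uu i t \<le> exp (Cz*T) * (uu i 0 + integral {0..T} f2)"
  proof (rule gronwall[OF Cz_nonneg T0 _ _ _ _ _ t])
    fix r assume r: "r \<in> {0..T}"
    show "(uu i has_real_derivative Dd i r) (at r within {0..T})" by (rule dd[OF N(2) r])
    have "Dd i r \<le> Cz * uu i r + 3*\<epsilon>^2 * U r + 3*\<epsilon>^2 * (At r)^2" using Dd_le[OF N(2) r] w_i by simp
    also have "\<dots> \<le> Cz * uu i r + f2 r" unfolding f2_def using mult_left_mono[OF U_le[OF r], of "\<epsilon>^2"] by simp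
    finally show "Dd i r \<le> Cz * uu i r + f2 r" .
  next
    show "continuous_on {0..T} f2" unfolding f2_def by (intro continuous_intros At_cont)
  next
    have "0 \<le> Ub" unfolding Ub_def using Qt0 T0 by simp
    then show "0 \<le> f2 r" for r unfolding f2_def by simp
  next
    show "0 \<le> uu i 0" by (rule uu0)
  qed
  also have "uu i 0 = 0" unfolding uu_def p_def q_def w_i using init[OF N(1) N(2) \<omega>] mf_init[OF \<omega>] by simp
  also have "integral {0..T} f2 = 3*\<epsilon>^2 * Ub * T + 3*\<epsilon>^2 * Qt"
    unfolding f2_def Qt_def using int_lin[OF At2_int T0, of "3*\<epsilon>^2" "3*\<epsilon>^2 * Ub"] by (simp add: add.commute mult.commute)
  finally have ui: "uu i t \<le> exp (Cz*T) * (3*\<epsilon>^2 * T * exp (C1*T) * (\<eta>^2 + (3*\<epsilon>^2 * Qt + 3*\<sigma>^2*\<eta>^2 * T)) + 3*\<epsilon>^2 * Qt)"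
    unfolding Ub_def by (simp add: mult_ac)
  also have "\<dots> \<le> exp (Cz*T) * (3*\<epsilon>^2 * T * exp (C1*T) * (\<eta>^2 + (3*\<epsilon>^2 * (2*Q + 2*T*(Lc*\<eta>)^2) + 3*\<sigma>^2*\<eta>^2 * T)) + 3*\<epsilon>^2 * (2*Q + 2*T*(Lc*\<eta>)^2))"
  proof -
    have a: "3*\<epsilon>^2 * Qt \<le> 3*\<epsilon>^2 * (2*Q + 2*T*(Lc*\<eta>)^2)" using Qt_le by (intro mult_left_mono) auto
    have b: "0 \<le> 3*\<epsilon>^2 * T * exp (C1*T)" using T0 by simp
    have c: "3*\<epsilon>^2 * T * exp (C1*T) * (\<eta>^2 + (3*\<epsilon>^2 * Qt + 3*\<sigma>^2*\<eta>^2 * T))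
        \<le> 3*\<epsilon>^2 * T * exp (C1*T) * (\<eta>^2 + (3*\<epsilon>^2 * (2*Q + 2*T*(Lc*\<eta>)^2) + 3*\<sigma>^2*\<eta>^2 * T))"
      using a b by (intro mult_left_mono) auto
    show ?thesis using a c by (intro mult_left_mono) auto
  qed
  also have "\<dots> = K1 * Q + K2 * \<eta>^2"
    unfolding K1_def K2_def by (simp add: algebra_simps power_mult_distrib)
  finally show ?thesis unfolding uu_def p_def q_def w_i Q_def .
qed

end

context fhn
begin

lemma K1_nonneg: "0 \<le> K1" unfolding K1_def using T by simp

lemma pathwise:
  assumes N: "1 \<le> N" "i < N" and \<omega>: "\<omega> \<in> space M"
    and good: "\<And>j. j < N \<Longrightarrow> Dv j \<omega> \<in> closure S"
    and t: "t \<in> {0..T}"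
  shows "(x N i \<omega> t - xh i \<omega> t)^2 + (y N i \<omega> t - yh i \<omega> t)^2
          \<le> K1 * integral {0..T} (\<lambda>s. (Av N \<omega> s)^2)"
proof (rule field_le_epsilon)
  fix e :: real assume e: "0 < e"
  define \<eta> where "\<eta> = sqrt (e / (\<bar>K2\<bar> + 1))"
  have \<eta>: "0 < \<eta>" unfolding \<eta>_def using e by simp
  have "\<forall>j. \<exists>\<omega>'. j < N \<longrightarrow> \<omega>' \<in> space M \<and> dist (Dv i \<omega>') (Dv j \<omega>) < \<eta>"
  proof
    fix j
    show "\<exists>\<omega>'. j < N \<longrightarrow> \<omega>' \<in> space M \<and> dist (Dv i \<omega>') (Dv j \<omega>) < \<eta>"
    proof (cases "j < N")
      case True
      then obtain s where "s \<in> S" "dist s (Dv j \<omega>) < \<eta>"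
        using good[OF True] \<eta> closure_approachable[of "Dv j \<omega>" S] by blast
      then show ?thesis unfolding S_def by auto
    qed auto
  qed
  then obtain w0 where w0: "\<And>j. j < N \<Longrightarrow> w0 j \<in> space M \<and> dist (Dv i (w0 j)) (Dv j \<omega>) < \<eta>"
    by metis
  define w where "w j = (if j = i then \<omega> else w0 j)" for j
  have "(x N i \<omega> t - xh i \<omega> t)^2 + (y N i \<omega> t - yh i \<omega> t)^2
          \<le> K1 * integral {0..T} (\<lambda>s. (Av N \<omega> s)^2) + K2 * \<eta>^2"
  proof (rule pathwise_eta[OF N \<omega> \<eta> _ _ _ good t])
    show "w j \<in> space M" if "j < N" for j using w0[OF that] \<omega> unfolding w_def by auto
    show "dist (Dv i (w j)) (Dv j \<omega>) \<le> \<eta>" if "j < N" for j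
      using w0[OF that] \<eta> unfolding w_def by (auto simp: less_imp_le)
    show "w i = \<omega>" unfolding w_def by simp
  qed auto
  also have "K2 * \<eta>^2 \<le> e"
  proof -
    have "\<eta>^2 = e / (\<bar>K2\<bar> + 1)" unfolding \<eta>_def using e by simp
    have "K2 * \<eta>^2 \<le> \<bar>K2\<bar> * \<eta>^2" by (rule mult_right_mono) auto
    then have "K2 * \<eta>^2 \<le> \<bar>K2\<bar> * (e / (\<bar>K2\<bar> + 1))" using \<open>\<eta>^2 = _\<close> by simp
    also have "\<dots> \<le> e" using e by (simp add: field_simps)
    finally show ?thesis .
  qed
  finally show "(x N i \<omega> t - xh i \<omega> t)^2 + (y N i \<omega> t - yh i \<omega> t)^2
          \<le> K1 * integral {0..T} (\<lambda>s. (Av N \<omega> s)^2) + e" by simp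
qed

lemma sup_bound:
  assumes N: "1 \<le> N" "i < N" and \<omega>: "\<omega> \<in> space M"
    and good: "\<And>j. j < N \<Longrightarrow> Dv j \<omega> \<in> closure S"
  shows "(SUP t\<in>{0..T}. \<bar>x N i \<omega> t - xh i \<omega> t\<bar>) + (SUP t\<in>{0..T}. \<bar>y N i \<omega> t - yh i \<omega> t\<bar>)
          \<le> 2 * sqrt (K1 * integral {0..T} (\<lambda>s. (Av N \<omega> s)^2))"
proof -
  define R where "R = sqrt (K1 * integral {0..T} (\<lambda>s. (Av N \<omega> s)^2))"
  have ne: "{0..T} \<noteq> {}" using T by simp
  have KQ0: "0 \<le> K1 * integral {0..T} (\<lambda>s. (Av N \<omega> s)^2)"
    by (intro mult_nonneg_nonneg K1_nonneg integral_nonneg integrable_continuous_interval continuous_intros Av_cont) auto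
  have R0: "0 \<le> R" unfolding R_def using KQ0 by simp
  have bx: "\<bar>x N i \<omega> t - xh i \<omega> t\<bar> \<le> R" and by': "\<bar>y N i \<omega> t - yh i \<omega> t\<bar> \<le> R" if t: "t \<in> {0..T}" for t
  proof -
    have p: "(x N i \<omega> t - xh i \<omega> t)^2 + (y N i \<omega> t - yh i \<omega> t)^2 \<le> R^2"
    proof -
      have "0 \<le> K1 * integral {0..T} (\<lambda>s. (Av N \<omega> s)^2)"
        by (intro mult_nonneg_nonneg K1_nonneg integral_nonneg integrable_continuous_interval continuous_intros Av_cont) auto
      then show ?thesis unfolding R_def using pathwise[OF N \<omega> good t] by simp
    qed
    have "(x N i \<omega> t - xh i \<omega> t)^2 \<le> R^2" using p by (smt (verit) zero_le_power2)
    then show "\<bar>x N i \<omega> t - xh i \<omega> t\<bar> \<le> R" using power2_le_imp_le[OF _ R0, of "\<bar>x N i \<omega> t - xh i \<omega> t\<bar>"] by simp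
    have "(y N i \<omega> t - yh i \<omega> t)^2 \<le> R^2" using p by (smt (verit) zero_le_power2)
    then show "\<bar>y N i \<omega> t - yh i \<omega> t\<bar> \<le> R" using power2_le_imp_le[OF _ R0, of "\<bar>y N i \<omega> t - yh i \<omega> t\<bar>"] by simp
  qed
  have "(SUP t\<in>{0..T}. \<bar>x N i \<omega> t - xh i \<omega> t\<bar>) \<le> R" by (rule cSUP_least[OF ne bx])
  moreover have "(SUP t\<in>{0..T}. \<bar>y N i \<omega> t - yh i \<omega> t\<bar>) \<le> R" by (rule cSUP_least[OF ne by'])
  ultimately show ?thesis unfolding R_def by simp
qed

end

context fhn
begin

lemma Fd_pair_meas: "(\<lambda>p. Fd (Dv j (fst p)) (snd p)) \<in> borel_measurable (M \<Otimes>\<^sub>M lborel)"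
proof -
  have "(\<lambda>p. (Dv j (fst p), snd p)) \<in> measurable (M \<Otimes>\<^sub>M lborel) (borel \<Otimes>\<^sub>M borel)"
    by measurable
  then have m: "(\<lambda>p. (Dv j (fst p), snd p)) \<in> measurable (M \<Otimes>\<^sub>M lborel) borel"
    by (simp add: borel_prod)
  show ?thesis using measurable_compose[OF m F_meas] by simp
qed

lemma mm_meas[measurable]: "mm \<in> borel_measurable borel"
  by (rule borel_measurable_continuous_onI[OF mm_cont])

lemma Av_pair_meas: "(\<lambda>p. Av N (fst p) (snd p)) \<in> borel_measurable (M \<Otimes>\<^sub>M lborel)"
proof -
  have "(\<lambda>p. snd p) \<in> measurable (M \<Otimes>\<^sub>M lborel) borel" by measurable
  then have m: "(\<lambda>p. mm (snd p)) \<in> borel_measurable (M \<Otimes>\<^sub>M lborel)"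
    using measurable_compose[OF _ mm_meas] by blast
  have "(\<lambda>p. (\<Sum>j<N. Fd (Dv j (fst p)) (snd p)) / real N - mm (snd p)) \<in> borel_measurable (M \<Otimes>\<^sub>M lborel)"
    using Fd_pair_meas m by (intro borel_measurable_diff borel_measurable_divide borel_measurable_sum) auto
  then show ?thesis unfolding Av_def by simp
qed

definition "Qn N \<omega> = (\<integral>\<^sup>+ s. ennreal ((Av N \<omega> s)^2) * indicator {0..T} s \<partial>lborel)"

lemma Qn_eq: "Qn N \<omega> = ennreal (integral {0..T} (\<lambda>s. (Av N \<omega> s)^2))"
proof -
  have "(\<lambda>s. (Av N \<omega> s)^2) integrable_on {0..T}"
    by (intro integrable_continuous_interval continuous_intros Av_cont)
  then have hi: "((\<lambda>s. (Av N \<omega> s)^2) has_integral integral {0..T} (\<lambda>s. (Av N \<omega> s)^2)) {0..T}"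
    by (rule integrable_integral)
  have "integral\<^sup>N lborel (\<lambda>s. ennreal ((Av N \<omega> s)^2) * indicator {0..T} s) = ennreal (integral {0..T} (\<lambda>s. (Av N \<omega> s)^2))"
    by (rule nn_integral_has_integral_lebesgue'[OF _ hi]) simp
  then show ?thesis unfolding Qn_def .
qed

lemma f_pair_meas: "(\<lambda>p. ennreal ((Av N (fst p) (snd p))^2) * indicator {0..T} (snd p)) \<in> borel_measurable (M \<Otimes>\<^sub>M lborel)"
proof -
  have "(\<lambda>p. indicator {0..T} (snd p) :: ennreal) \<in> borel_measurable (M \<Otimes>\<^sub>M lborel)" by measurable
  then show ?thesis using Av_pair_meas by measurable
qed

lemma Qn_meas: "(\<lambda>\<omega>. Qn N \<omega>) \<in> borel_measurable M"
  unfolding Qn_def using f_pair_meas[of N]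
  by (intro lborel.borel_measurable_nn_integral) (simp add: case_prod_beta')

lemma Vb_nonneg: "0 \<le> Vb"
proof -
  have "0 \<le> expectation (\<lambda>\<omega>. (Yv 0 0 \<omega>)^2)" by (rule Bochner_Integration.integral_nonneg) simp
  then show ?thesis using E_Yv_sq[of 0 0] by linarith
qed

lemma E_Qn:
  assumes N: "1 \<le> N"
  shows "(\<integral>\<^sup>+\<omega>. Qn N \<omega> \<partial>M) \<le> ennreal (T * (Vb / real N))"
proof -
  interpret P: pair_sigma_finite M lborel by unfold_locales
  define f where "f p = ennreal ((Av N (fst p) (snd p))^2) * indicator {0..T} (snd p)" for p
  have fm: "f \<in> borel_measurable (M \<Otimes>\<^sub>M lborel)" unfolding f_def by (rule f_pair_meas)
  have "(\<integral>\<^sup>+\<omega>. Qn N \<omega> \<partial>M) = (\<integral>\<^sup>+\<omega>. (\<integral>\<^sup>+ s. f (\<omega>, s) \<partial>lborel) \<partial>M)"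
    unfolding Qn_def f_def by simp
  also have "\<dots> = (\<integral>\<^sup>+ s. (\<integral>\<^sup>+\<omega>. f (\<omega>, s) \<partial>M) \<partial>lborel)"
    by (rule P.Fubini[OF fm, symmetric])
  also have "\<dots> \<le> (\<integral>\<^sup>+ s. ennreal (Vb / real N) * indicator {0..T} s \<partial>lborel)"
  proof (rule nn_integral_mono)
    fix s
    show "(\<integral>\<^sup>+\<omega>. f (\<omega>, s) \<partial>M) \<le> ennreal (Vb / real N) * indicator {0..T} s"
    proof (cases "s \<in> {0..T}")
      case True
      have "(\<integral>\<^sup>+\<omega>. f (\<omega>, s) \<partial>M) = (\<integral>\<^sup>+\<omega>. ennreal ((Av N \<omega> s)^2) \<partial>M)"
        unfolding f_def using True by simp
      also have "\<dots> = ennreal (expectation (\<lambda>\<omega>. (Av N \<omega> s)^2))"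
        by (rule nn_integral_eq_integral[OF E_Av_sq(1)[OF N]]) simp
      also have "\<dots> \<le> ennreal (Vb / real N)" using E_Av_sq(2)[OF N] by (rule ennreal_leI)
      finally show ?thesis using True by simp
    next
      case False
      then show ?thesis unfolding f_def by simp
    qed
  qed
  also have "\<dots> = ennreal (Vb / real N) * ennreal T"
    using T by (subst nn_integral_cmult_indicator) auto
  also have "\<dots> = ennreal (T * (Vb / real N))"
    using T Vb_nonneg by (simp add: ennreal_mult[symmetric] mult.commute)
  finally show ?thesis .
qed

lemma amgm: "0 \<le> a \<Longrightarrow> 0 < (\<eta>::real) \<Longrightarrow> 2 * sqrt a \<le> a / \<eta> + \<eta>"
proof -
  assume a: "0 \<le> a" and e: "0 < \<eta>"
  define r where "r = sqrt a"
  have r2: "r^2 = a" unfolding r_def using a by simp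
  have "0 \<le> (r - \<eta>)^2 / \<eta>" using e by simp
  also have "(r - \<eta>)^2 / \<eta> = a / \<eta> + \<eta> - 2 * r"
    using e r2[symmetric] by (simp add: power2_eq_square field_simps)
  finally show ?thesis unfolding r_def by simp
qed

lemma bound_eta:
  assumes N: "i < N" and e: "0 < \<eta>"
  shows "(\<integral>\<^sup>+ \<omega>. ennreal ((SUP t\<in>{0..T}. \<bar>x N i \<omega> t - xh i \<omega> t\<bar>)
                              + (SUP t\<in>{0..T}. \<bar>y N i \<omega> t - yh i \<omega> t\<bar>)) \<partial>M)
          \<le> ennreal (K1 / \<eta> * (T * (Vb / real N)) + \<eta>)"
proof -
  have N1: "1 \<le> N" using N by simp
  have closedS: "closure S \<in> sets borel" by (intro borel_closed) simp
  have "AE \<omega> in M. \<forall>j\<in>{..<N}. Dv j \<omega> \<in> closure S"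
  proof (rule eventually_ball_finite)
    show "\<forall>j\<in>{..<N}. AE \<omega> in M. Dv j \<omega> \<in> closure S"
      using AE_D[OF closedS] closure_subset[of S] unfolding S_def by blast
  qed simp
  then have "AE \<omega> in M. ennreal ((SUP t\<in>{0..T}. \<bar>x N i \<omega> t - xh i \<omega> t\<bar>)
                              + (SUP t\<in>{0..T}. \<bar>y N i \<omega> t - yh i \<omega> t\<bar>))
       \<le> ennreal (K1 / \<eta>) * Qn N \<omega> + ennreal \<eta>"
  proof (rule AE_mp[OF _ AE_I2[OF impI]])
    fix \<omega> assume \<omega>: "\<omega> \<in> space M" and good: "\<forall>j\<in>{..<N}. Dv j \<omega> \<in> closure S"
    define q where "q = integral {0..T} (\<lambda>s. (Av N \<omega> s)^2)"
    have q0: "0 \<le> q" unfolding q_def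
      by (intro integral_nonneg integrable_continuous_interval continuous_intros Av_cont) auto
    have "(SUP t\<in>{0..T}. \<bar>x N i \<omega> t - xh i \<omega> t\<bar>) + (SUP t\<in>{0..T}. \<bar>y N i \<omega> t - yh i \<omega> t\<bar>)
        \<le> 2 * sqrt (K1 * q)" unfolding q_def using sup_bound[OF N1 N \<omega>] good by auto
    also have "\<dots> \<le> K1 * q / \<eta> + \<eta>" by (rule amgm) (use K1_nonneg q0 e in auto)
    finally have "ennreal ((SUP t\<in>{0..T}. \<bar>x N i \<omega> t - xh i \<omega> t\<bar>) + (SUP t\<in>{0..T}. \<bar>y N i \<omega> t - yh i \<omega> t\<bar>))
        \<le> ennreal (K1 * q / \<eta> + \<eta>)" by (rule ennreal_leI)
    also have "ennreal (K1 * q / \<eta> + \<eta>) = ennreal (K1 / \<eta>) * Qn N \<omega> + ennreal \<eta>"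
      unfolding Qn_eq q_def[symmetric] using K1_nonneg q0 e
      by (simp add: ennreal_plus[symmetric] ennreal_mult[symmetric] del: ennreal_plus)
    finally show "ennreal ((SUP t\<in>{0..T}. \<bar>x N i \<omega> t - xh i \<omega> t\<bar>) + (SUP t\<in>{0..T}. \<bar>y N i \<omega> t - yh i \<omega> t\<bar>))
        \<le> ennreal (K1 / \<eta>) * Qn N \<omega> + ennreal \<eta>" .
  qed
  then have "(\<integral>\<^sup>+ \<omega>. ennreal ((SUP t\<in>{0..T}. \<bar>x N i \<omega> t - xh i \<omega> t\<bar>)
                              + (SUP t\<in>{0..T}. \<bar>y N i \<omega> t - yh i \<omega> t\<bar>)) \<partial>M)
       \<le> (\<integral>\<^sup>+ \<omega>. ennreal (K1 / \<eta>) * Qn N \<omega> + ennreal \<eta> \<partial>M)"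
    by (rule nn_integral_mono_AE)
  also have "\<dots> = ennreal (K1 / \<eta>) * (\<integral>\<^sup>+ \<omega>. Qn N \<omega> \<partial>M) + ennreal \<eta>"
    using Qn_meas[of N] by (simp add: nn_integral_add nn_integral_cmult emeasure_space_1)
  also have "\<dots> \<le> ennreal (K1 / \<eta>) * ennreal (T * (Vb / real N)) + ennreal \<eta>"
    using E_Qn[OF N1] by (intro add_mono mult_left_mono) auto
  also have "\<dots> = ennreal (K1 / \<eta> * (T * (Vb / real N)) + \<eta>)"
    using K1_nonneg e T Vb_nonneg by (simp add: ennreal_plus[symmetric] ennreal_mult[symmetric] del: ennreal_plus)
  finally show ?thesis .
qed

lemma main:
  "(\<lambda>N. \<integral>\<^sup>+ \<omega>. ennreal ((SUP t\<in>{0..T}. \<bar>x N i \<omega> t - xh i \<omega> t\<bar>)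
                              + (SUP t\<in>{0..T}. \<bar>y N i \<omega> t - yh i \<omega> t\<bar>)) \<partial>M)
         \<longlonglongrightarrow> 0"
  (is "?f \<longlonglongrightarrow> 0")
proof (rule order_tendstoI)
  fix a :: ennreal assume "a < 0" then show "eventually (\<lambda>N. a < ?f N) sequentially" by simp
next
  fix a :: ennreal assume a: "0 < a"
  obtain \<eta> where e: "0 < \<eta>" and ea: "ennreal (2 * \<eta>) < a"
  proof (cases a)
    case (real r)
    then have r: "0 < r" using a by simp
    show ?thesis by (rule that[of "r/4"]) (use r real in \<open>auto simp: ennreal_less_iff\<close>)
  next
    case top
    then show ?thesis by (intro that[of 1]) auto
  qed
  define C where "C = K1 * T * Vb / \<eta>^2"
  have "eventually (\<lambda>N. Suc i \<le> N \<and> nat \<lceil>C\<rceil> \<le> N) sequentially"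
    by (intro eventually_conj eventually_ge_at_top)
  then show "eventually (\<lambda>N. ?f N < a) sequentially"
  proof eventually_elim
    case (elim N)
    then have Ni: "i < N" and NC: "C \<le> real N" by linarith+
    have Npos: "0 < real N" using Ni by simp
    have "K1 / \<eta> * (T * (Vb / real N)) \<le> \<eta>"
    proof -
      have "K1 * T * Vb \<le> \<eta>^2 * real N" using NC e unfolding C_def by (simp add: field_simps)
      then show ?thesis using e Npos by (simp add: field_simps power2_eq_square)
    qed
    then have "?f N \<le> ennreal (2 * \<eta>)"
      using bound_eta[OF Ni e] by (smt (verit) ennreal_leI order_trans)
    then show "?f N < a" using ea by simp
  qed
qed

end

theorem theorem1:
  fixes M :: "'a measure"
    and \<xi> \<delta> \<nu> \<epsilon> \<mu> \<sigma> \<alpha> \<beta> \<gamma> T :: real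
    and I x0 y0 :: "nat \<Rightarrow> 'a \<Rightarrow> real"
    and x y :: "nat \<Rightarrow> nat \<Rightarrow> 'a \<Rightarrow> real \<Rightarrow> real"
    and xh yh :: "nat \<Rightarrow> 'a \<Rightarrow> real \<Rightarrow> real"
    and i :: nat
  assumes P: "prob_space M"
    and delta: "\<delta> < 0"
    and T: "T > 0"
    and indep: "prob_space.indep_vars M (\<lambda>_. borel)
                  (\<lambda>k. case k of Inl j \<Rightarrow> (\<lambda>\<omega>. (I j \<omega>, 0::real))
                               | Inr j \<Rightarrow> (\<lambda>\<omega>. (x0 j \<omega>, y0 j \<omega>))) UNIV"
    and gauss: "\<And>j. distributed M lborel (I j) std_normal_density"
    and iid_init: "\<And>j. distr M borel (\<lambda>\<omega>. (x0 j \<omega>, y0 j \<omega>)) = distr M borel (\<lambda>\<omega>. (x0 0 \<omega>, y0 0 \<omega>))"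
    and mom_x: "integrable M (\<lambda>\<omega>. (x0 0 \<omega>)^2)"
    and mom_y: "integrable M (\<lambda>\<omega>. (y0 0 \<omega>)^2)"
    and ode_x: "\<And>N j \<omega> t. N \<ge> 1 \<Longrightarrow> j < N \<Longrightarrow> \<omega> \<in> space M \<Longrightarrow> t \<in> {0..T} \<Longrightarrow>
       (x N j \<omega> has_real_derivative
          (\<xi> * x N j \<omega> t + \<delta> * (x N j \<omega> t)^3 + \<nu> * y N j \<omega> t
           + \<epsilon> * ((\<Sum>k<N. x N k \<omega> t) / real N) + \<mu> + \<sigma> * I j \<omega>)) (at t within {0..T})"
    and ode_y: "\<And>N j \<omega> t. N \<ge> 1 \<Longrightarrow> j < N \<Longrightarrow> \<omega> \<in> space M \<Longrightarrow> t \<in> {0..T} \<Longrightarrow>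
       (y N j \<omega> has_real_derivative (\<alpha> * (x N j \<omega> t + \<beta> * y N j \<omega> t + \<gamma>))) (at t within {0..T})"
    and init: "\<And>N j \<omega>. N \<ge> 1 \<Longrightarrow> j < N \<Longrightarrow> \<omega> \<in> space M \<Longrightarrow>
       x N j \<omega> 0 = x0 j \<omega> \<and> y N j \<omega> 0 = y0 j \<omega>"
    and mf_int: "\<And>j t. t \<in> {0..T} \<Longrightarrow> integrable M (\<lambda>\<omega>. xh j \<omega> t)"
    and mf_x: "\<And>j \<omega> t. \<omega> \<in> space M \<Longrightarrow> t \<in> {0..T} \<Longrightarrow>
       (xh j \<omega> has_real_derivative
          (\<xi> * xh j \<omega> t + \<delta> * (xh j \<omega> t)^3 + \<nu> * yh j \<omega> t
           + \<epsilon> * prob_space.expectation M (\<lambda>\<omega>'. xh j \<omega>' t) + \<mu> + \<sigma> * I j \<omega>)) (at t within {0..T})"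
    and mf_y: "\<And>j \<omega> t. \<omega> \<in> space M \<Longrightarrow> t \<in> {0..T} \<Longrightarrow>
       (yh j \<omega> has_real_derivative (\<alpha> * (xh j \<omega> t + \<beta> * yh j \<omega> t + \<gamma>))) (at t within {0..T})"
    and mf_init: "\<And>j \<omega>. \<omega> \<in> space M \<Longrightarrow> xh j \<omega> 0 = x0 j \<omega> \<and> yh j \<omega> 0 = y0 j \<omega>"
  shows "(\<lambda>N. \<integral>\<^sup>+ \<omega>. ennreal ((SUP t\<in>{0..T}. \<bar>x N i \<omega> t - xh i \<omega> t\<bar>)
                              + (SUP t\<in>{0..T}. \<bar>y N i \<omega> t - yh i \<omega> t\<bar>)) \<partial>M)
         \<longlonglongrightarrow> 0"
proof -
  interpret fhn M \<xi> \<delta> \<nu> \<epsilon> \<mu> \<sigma> \<alpha> \<beta> \<gamma> T I x0 y0 x y xh yh i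
  proof (rule fhn.intro[OF P], rule fhn_axioms.intro)
  qed (fact delta T indep gauss iid_init mom_x mom_y ode_x ode_y init mf_int mf_x mf_y mf_init)+
  show ?thesis by (rule main)
qed

end
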